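(* Let $n\ge3$, let $\Omega\subset\mathbb{R}^n$ be a bounded domain with smooth boundary and let $u$ solve $\Delta u=-n$ in $\Omega$, $u=0$ on $\partial\Omega$. Then $$\max_{\partial\Omega}\frac{|\nabla u|}{\sqrt{2u_{\max}}}\ge1,$$ and equality holds if and only if $(\Omega,u)$ is equivalent to the Serrin solution $\Omega_0=B_1(0)$, $u_0(x)=\frac{1-|x|^2}{2}$.
   Context: $u_{\max}=\max_\Omega u$. $(\bar\Omega,\bar u)$ is equivalent to $(\Omega,u)$ if $\bar\Omega=\{\lambda x+c:x\in\Omega\}$ and $\bar u(y)=\lambda^2u((y-c)/\lambda)$ for some $\lambda>0$, $c\in\mathbb{R}^n$. *)

theory Defs
  imports "HOL-Analysis.Analysis"
begin

primrec C_k :: "nat \<Rightarrow> (real^'n) set \<Rightarrow> (real^'n \<Rightarrow> real) \<Rightarrow> bool" where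
  "C_k 0 U f = continuous_on U f"
| "C_k (Suc k) U f =
     ((\<forall>x\<in>U. f differentiable (at x)) \<and>
      (\<forall>i. C_k k U (\<lambda>x. frechet_derivative f (at x) (axis i 1))))"

definition C_infinity :: "(real^'n) set \<Rightarrow> (real^'n \<Rightarrow> real) \<Rightarrow> bool" where
  "C_infinity U f \<longleftrightarrow> (\<forall>k. C_k k U f)"

definition smooth_boundary :: "(real^'n) set \<Rightarrow> bool" where
  "smooth_boundary \<Omega> \<longleftrightarrow>
     (\<forall>p\<in>frontier \<Omega>. \<exists>U \<phi>. open U \<and> p \<in> U \<and> C_infinity U \<phi> \<and>
        (\<forall>x\<in>U. frechet_derivative \<phi> (at x) \<noteq> (\<lambda>h. 0)) \<and>
        \<Omega> \<inter> U = {x\<in>U. \<phi> x < 0} \<and> frontier \<Omega> \<inter> U = {x\<in>U. \<phi> x = 0})"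

definition bounded_domain :: "(real^'n) set \<Rightarrow> bool" where
  "bounded_domain \<Omega> \<longleftrightarrow> open \<Omega> \<and> connected \<Omega> \<and> bounded \<Omega> \<and> \<Omega> \<noteq> {}"

definition u0 :: "real^'n \<Rightarrow> real" where
  "u0 x = (1 - (norm x)\<^sup>2) / 2"

definition equivalent_pair ::
  "(real^'n) set \<Rightarrow> (real^'n \<Rightarrow> real) \<Rightarrow> (real^'n) set \<Rightarrow> (real^'n \<Rightarrow> real) \<Rightarrow> bool" where
  "equivalent_pair \<Omega> u \<Omega>' u' \<longleftrightarrow>
     (\<exists>l>0. \<exists>c. \<Omega> = (\<lambda>x. l *\<^sub>R x + c) ` \<Omega>' \<and>
        (\<forall>y\<in>\<Omega>. u y = l\<^sup>2 * u' ((1/l) *\<^sub>R (y - c))))"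

end

theory Submission
  imports Defs
begin


lemma second_deriv_local_max:
  fixes g g1 :: "real \<Rightarrow> real"
  assumes d: "d > 0"
    and g: "\<And>t. \<bar>t\<bar> < d \<Longrightarrow> (g has_real_derivative g1 t) (at t)"
    and g1: "(g1 has_real_derivative g2) (at 0)"
    and mx: "\<And>t. \<bar>t\<bar> < d \<Longrightarrow> g t \<le> g 0"
  shows "g2 \<le> 0"
proof (rule ccontr)
  assume "\<not> g2 \<le> 0"
  hence pos: "g2 > 0" by simp
  have g10: "g1 0 = 0"
    using DERIV_local_max[OF g[of 0] d] mx d by (simp add: abs_minus_commute)
  obtain d' where d': "d' > 0" "\<And>h. h > 0 \<Longrightarrow> h < d' \<Longrightarrow> g1 0 < g1 (0 + h)"
    using DERIV_pos_inc_right[OF g1 pos] by blast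
  define h where "h = min d d' / 2"
  have h: "h > 0" "h < d" "h < d'" using d d'(1) by (auto simp: h_def)
  obtain z where z: "z > 0" "z < h" "g h - g 0 = (h - 0) * g1 z"
    using MVT2[of 0 h g g1] h g by force
  have "g1 z > 0" using d'(2)[of z] z h g10 by simp
  hence "g h > g 0" using z h by (simp add: algebra_simps)
  moreover have "g h \<le> g 0" using mx[of h] h by simp
  ultimately show False by simp
qed

lemma second_deriv_local_min:
  fixes g g1 :: "real \<Rightarrow> real"
  assumes d: "d > 0"
    and g: "\<And>t. \<bar>t\<bar> < d \<Longrightarrow> (g has_real_derivative g1 t) (at t)"
    and g1: "(g1 has_real_derivative g2) (at 0)"
    and mn: "\<And>t. \<bar>t\<bar> < d \<Longrightarrow> g t \<ge> g 0"
  shows "g2 \<ge> 0"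
proof -
  have "- g2 \<le> 0"
    apply (rule second_deriv_local_max[of d "\<lambda>t. - g t" "\<lambda>t. - g1 t"])
    using d g g1 mn by (auto intro!: derivative_intros)
  thus ?thesis by simp
qed

lemma line_deriv:
  fixes f :: "'a::real_normed_vector \<Rightarrow> real"
  assumes "(f has_derivative f') (at (y + t *\<^sub>R v))"
  shows "((\<lambda>s. f (y + s *\<^sub>R v)) has_real_derivative f' v) (at t)"
proof -
  have l: "linear f'" using assms has_derivative_linear by blast
  have "((\<lambda>s. y + s *\<^sub>R v) has_derivative (\<lambda>s. s *\<^sub>R v)) (at t)"
    by (auto intro!: derivative_eq_intros)
  from has_derivative_compose[OF this assms]
  have "((\<lambda>s. f (y + s *\<^sub>R v)) has_derivative (\<lambda>s. f' (s *\<^sub>R v))) (at t)" by (simp add: o_def)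
  moreover have "(\<lambda>s. f' (s *\<^sub>R v)) = (\<lambda>s. s * f' v)"
    using linear_scale[OF l] by auto
  ultimately have "((\<lambda>s. f (y + s *\<^sub>R v)) has_derivative (\<lambda>s. s * f' v)) (at t)" by simp
  moreover have "(\<lambda>s. s * f' v) = (*) (f' v)" by (auto simp: mult.commute)
  ultimately show ?thesis by (simp add: has_field_derivative_def)
qed

lemma comp_deriv:
  fixes F :: "'a::real_normed_vector \<Rightarrow> real^'n"
  assumes "(F has_derivative F') (at x)"
  shows "((\<lambda>y. F y $ k) has_derivative (\<lambda>h. F' h $ k)) (at x)"
  using bounded_linear.has_derivative[OF bounded_linear_vec_nth assms] .


lemma compact_margin:
  fixes K \<Omega> :: "'a::euclidean_space set"
  assumes K: "compact K" and O: "open \<Omega>" and sub: "K \<subseteq> \<Omega>"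
  obtains r where "r > 0" "compact {x + y |x y. x \<in> K \<and> y \<in> cball 0 r}"
    "{x + y |x y. x \<in> K \<and> y \<in> cball 0 r} \<subseteq> \<Omega>"
proof -
  have "\<exists>r>0. \<forall>x\<in>K. \<forall>y. dist x y \<le> r \<longrightarrow> y \<in> \<Omega>"
  proof (cases "K = {} \<or> - \<Omega> = {}")
    case True then show ?thesis by (auto intro: exI[of _ 1])
  next
    case False
    then have Kne: "K \<noteq> {}" and Cne: "- \<Omega> \<noteq> {}" by auto
    have "continuous_on K (\<lambda>x. infdist x (- \<Omega>))" by (intro continuous_intros)
    from continuous_attains_inf[OF K Kne this] obtain x0 where x0: "x0 \<in> K"
      "\<And>y. y \<in> K \<Longrightarrow> infdist x0 (- \<Omega>) \<le> infdist y (- \<Omega>)" by blast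
    have pos: "infdist x0 (- \<Omega>) > 0"
      using infdist_pos_not_in_closed[of "- \<Omega>" x0] O Cne x0(1) sub by auto
    show ?thesis
    proof (intro exI[of _ "infdist x0 (- \<Omega>) / 2"] conjI ballI allI impI)
      fix x y assume x: "x \<in> K" and d: "dist x y \<le> infdist x0 (- \<Omega>) / 2"
      show "y \<in> \<Omega>"
      proof (rule ccontr)
        assume "y \<notin> \<Omega>"
        hence "infdist x (- \<Omega>) \<le> dist x y" by (intro infdist_le) auto
        with x0(2)[OF x] d pos show False by linarith
      qed
    qed (use pos in auto)
  qed
  then obtain r where r: "r > 0" "\<And>x y. x \<in> K \<Longrightarrow> dist x y \<le> r \<Longrightarrow> y \<in> \<Omega>" by blast
  show ?thesis
  proof (rule that[OF r(1)])
    show "compact {x + y |x y. x \<in> K \<and> y \<in> cball 0 r}"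
      using compact_sums[OF K compact_cball[of 0 r]] by simp
    show "{x + y |x y. x \<in> K \<and> y \<in> cball 0 r} \<subseteq> \<Omega>"
    proof safe
      fix x y :: 'a assume "x \<in> K" "y \<in> cball 0 r"
      then show "x + y \<in> \<Omega>" using r(2)[of x "x + y"] by (auto simp: dist_norm)
    qed
  qed
qed

lemma dq_unif:
  fixes f d :: "'a::euclidean_space \<Rightarrow> real" and f' :: "'a \<Rightarrow> 'a \<Rightarrow> real"
  assumes K': "compact K'" and r: "r > 0"
    and inK: "\<And>x s. x \<in> K \<Longrightarrow> 0 \<le> s \<Longrightarrow> s \<le> r \<Longrightarrow> x + s *\<^sub>R v \<in> K'"
    and der: "\<And>y. y \<in> K' \<Longrightarrow> (f has_derivative f' y) (at y)"
    and dv: "\<And>y. y \<in> K' \<Longrightarrow> f' y v = d y"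
    and dc: "continuous_on K' d"
    and nv: "norm v = 1"
    and e: "e > 0"
  shows "eventually (\<lambda>h. \<forall>x\<in>K. \<bar>(f (x + h *\<^sub>R v) - f x) / h - d x\<bar> \<le> e) (at_right 0)"
proof -
  have "uniformly_continuous_on K' d" using compact_uniformly_continuous[OF dc K'] .
  then obtain \<eta> where \<eta>: "\<eta> > 0" "\<And>x x'. x \<in> K' \<Longrightarrow> x' \<in> K' \<Longrightarrow> dist x' x < \<eta> \<Longrightarrow> dist (d x') (d x) < e"
    unfolding uniformly_continuous_on_def using e by metis
  have ev: "eventually (\<lambda>h. h \<in> {0<..<min r \<eta>}) (at_right 0)"
    by (rule eventually_at_right_real) (use r \<eta> in auto)
  show ?thesis
  proof (rule eventually_mono[OF ev], safe)
    fix h x assume h: "h \<in> {0<..<min r \<eta>}" and x: "x \<in> K"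
    have D: "((\<lambda>s. f (x + s *\<^sub>R v)) has_real_derivative d (x + s *\<^sub>R v)) (at s)"
      if "0 \<le> s" "s \<le> h" for s
    proof -
      have m: "x + s *\<^sub>R v \<in> K'" using inK[OF x, of s] that h by auto
      show ?thesis using line_deriv[OF der[OF m]] dv[OF m] by simp
    qed
    obtain z where z: "0 < z" "z < h" "f (x + h *\<^sub>R v) - f (x + 0 *\<^sub>R v) = (h - 0) * d (x + z *\<^sub>R v)"
      using MVT2[of 0 h "\<lambda>s. f (x + s *\<^sub>R v)" "\<lambda>s. d (x + s *\<^sub>R v)"] h D by force
    have q: "(f (x + h *\<^sub>R v) - f x) / h = d (x + z *\<^sub>R v)" using z h by auto
    have "dist (d (x + z *\<^sub>R v)) (d x) < e"
      apply (rule \<eta>(2))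
      using inK[OF x, of 0] inK[OF x, of z] z h nv by (auto simp: dist_norm)
    then show "\<bar>(f (x + h *\<^sub>R v) - f x) / h - d x\<bar> \<le> e" using q by (simp add: dist_real_def)
  qed
qed

lemma deriv_Q:
  fixes a a' :: "'j::finite \<Rightarrow> real \<Rightarrow> real"
  assumes "\<And>j. (a j has_real_derivative a' j t) (at t)" "(b has_real_derivative b' t) (at t)"
    "(\<beta> has_real_derivative \<beta>' t) (at t)"
  shows "((\<lambda>s. (\<Sum>j\<in>UNIV. ((a j s - b s) / h)\<^sup>2) + 2 * b s + \<beta> s) has_real_derivative
      (\<Sum>j\<in>UNIV. 2 * ((a j t - b t) / h) * ((a' j t - b' t) / h)) + 2 * b' t + \<beta>' t) (at t)"
  using assms by (cases "h = 0") (auto intro!: derivative_eq_intros sum.cong simp: power2_eq_square field_simps)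

lemma deriv_Q1:
  fixes a c :: "'j::finite \<Rightarrow> real \<Rightarrow> real" and a' c' :: "'j \<Rightarrow> real"
  assumes "\<And>j. (a j has_real_derivative a' j) (at t)" "(b has_real_derivative b') (at t)"
    "\<And>j. (c j has_real_derivative c' j) (at t)" "(d has_real_derivative d') (at t)"
    "(\<beta> has_real_derivative \<beta>') (at t)"
  shows "((\<lambda>s. (\<Sum>j\<in>UNIV. 2 * ((a j s - b s) / h) * ((c j s - d s) / h)) + 2 * d s + \<beta> s) has_real_derivative
      (\<Sum>j\<in>UNIV. 2 * (((a' j - b') / h) * ((c j t - d t) / h) + ((a j t - b t) / h) * ((c' j - d') / h))) + 2 * d' + \<beta>') (at t)"
  using assms by (cases "h = 0") (auto intro!: derivative_eq_intros sum.cong simp: field_simps)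


lemma sq_approx:
  fixes a b :: "'i \<Rightarrow> real"
  assumes "finite I" "\<And>i. i \<in> I \<Longrightarrow> \<bar>a i - b i\<bar> \<le> \<eta>" "\<And>i. i \<in> I \<Longrightarrow> \<bar>b i\<bar> \<le> Bd"
    "0 \<le> \<eta>" "\<eta> \<le> 1"
  shows "\<bar>(\<Sum>i\<in>I. (a i)\<^sup>2) - (\<Sum>i\<in>I. (b i)\<^sup>2)\<bar> \<le> real (card I) * (\<eta> * (1 + 2 * Bd))"
proof -
  have "\<bar>(\<Sum>i\<in>I. (a i)\<^sup>2) - (\<Sum>i\<in>I. (b i)\<^sup>2)\<bar> = \<bar>\<Sum>i\<in>I. (a i)\<^sup>2 - (b i)\<^sup>2\<bar>"
    by (simp add: sum_subtractf)
  also have "\<dots> \<le> (\<Sum>i\<in>I. \<bar>(a i)\<^sup>2 - (b i)\<^sup>2\<bar>)" by (rule sum_abs)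
  also have "\<dots> \<le> (\<Sum>i\<in>I. \<eta> * (1 + 2 * Bd))"
  proof (rule sum_mono)
    fix i assume i: "i \<in> I"
    have "\<bar>(a i)\<^sup>2 - (b i)\<^sup>2\<bar> = \<bar>a i - b i\<bar> * \<bar>(a i - b i) + 2 * b i\<bar>"
      by (simp add: power2_eq_square abs_mult[symmetric] algebra_simps)
    also have "\<dots> \<le> \<eta> * (1 + 2 * Bd)"
    proof (rule mult_mono)
      show "\<bar>a i - b i\<bar> \<le> \<eta>" using assms(2)[OF i] .
      have "\<bar>(a i - b i) + 2 * b i\<bar> \<le> \<bar>a i - b i\<bar> + 2 * \<bar>b i\<bar>" by linarith
      thus "\<bar>(a i - b i) + 2 * b i\<bar> \<le> 1 + 2 * Bd" using assms(2,3)[OF i] assms(5) by linarith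
    qed (use assms in auto)
    finally show "\<bar>(a i)\<^sup>2 - (b i)\<^sup>2\<bar> \<le> \<eta> * (1 + 2 * Bd)" .
  qed
  also have "\<dots> = real (card I) * (\<eta> * (1 + 2 * Bd))" by simp
  finally show ?thesis .
qed

locale torsion =
  fixes \<Omega> :: "(real^'n) set" and u :: "real^'n \<Rightarrow> real"
    and Du :: "real^'n \<Rightarrow> real^'n" and D2u :: "real^'n \<Rightarrow> real^'n \<Rightarrow> real^'n"
  assumes opn: "open \<Omega>" and bdd: "bounded \<Omega>"
    and grad: "\<forall>x\<in>\<Omega>. (u has_derivative (\<lambda>h. Du x \<bullet> h)) (at x)"
    and hess: "\<forall>x\<in>\<Omega>. (Du has_derivative D2u x) (at x)"
    and hess_cont: "\<forall>i j. continuous_on \<Omega> (\<lambda>x. D2u x (axis i 1) $ j)"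
    and pde: "\<forall>x\<in>\<Omega>. (\<Sum>i\<in>UNIV. D2u x (axis i 1) $ i) = - real CARD('n)"
    and u_cont: "continuous_on (closure \<Omega>) u"
    and Du_cont: "continuous_on (closure \<Omega>) Du"
begin

definition P :: "real^'n \<Rightarrow> real" where "P x = Du x \<bullet> Du x + 2 * u x"

definition F :: "real^'n \<Rightarrow> real" where
  "F x = 2 * (\<Sum>j\<in>UNIV. \<Sum>k\<in>UNIV. (D2u x (axis j 1) $ k)\<^sup>2) - 2 * real CARD('n)"

lemma P_sum: "P x = (\<Sum>j\<in>UNIV. (Du x $ j)\<^sup>2) + 2 * u x"
  by (simp add: P_def inner_vec_def power2_eq_square)

lemma u_line:
  assumes "y + t *\<^sub>R axis k 1 \<in> \<Omega>"
  shows "((\<lambda>s. u (y + s *\<^sub>R axis k 1)) has_real_derivative Du (y + t *\<^sub>R axis k 1) $ k) (at t)"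
  using line_deriv[OF grad[rule_format, OF assms]] by (simp add: inner_axis)

lemma Du_line:
  assumes "y + t *\<^sub>R axis k 1 \<in> \<Omega>"
  shows "((\<lambda>s. Du (y + s *\<^sub>R axis k 1) $ i) has_real_derivative D2u (y + t *\<^sub>R axis k 1) (axis k 1) $ i) (at t)"
  using line_deriv[OF comp_deriv[OF hess[rule_format, OF assms]]] by simp

lemma F_nonneg:
  assumes "x \<in> \<Omega>" shows "F x \<ge> 0"
proof -
  have "(\<Sum>j\<in>UNIV. D2u x (axis j 1) $ j)\<^sup>2 \<le> (\<Sum>j\<in>UNIV. (D2u x (axis j 1) $ j)\<^sup>2) * real CARD('n)"
    using sum_squared_le_sum_of_squares[of "\<lambda>j. D2u x (axis j 1) $ j" UNIV] by simp
  hence "real CARD('n) * real CARD('n) \<le> (\<Sum>j\<in>UNIV. (D2u x (axis j 1) $ j)\<^sup>2) * real CARD('n)"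
    using pde assms by (simp add: power2_eq_square)
  hence 1: "real CARD('n) \<le> (\<Sum>j\<in>UNIV. (D2u x (axis j 1) $ j)\<^sup>2)" by simp
  have "(\<Sum>j\<in>UNIV. (D2u x (axis j 1) $ j)\<^sup>2) \<le> (\<Sum>j\<in>UNIV. \<Sum>k\<in>UNIV. (D2u x (axis j 1) $ k)\<^sup>2)"
    by (intro sum_mono member_le_sum) auto
  with 1 show ?thesis by (simp add: F_def)
qed

end


context torsion begin

lemma Qsecond:
  fixes B :: "real^'n \<Rightarrow> real" and DB :: "real^'n \<Rightarrow> real^'n"
    and D2B :: "real^'n \<Rightarrow> real^'n \<Rightarrow> real^'n"
  assumes Bd1: "\<And>x. (B has_derivative (\<lambda>v. DB x \<bullet> v)) (at x)"
    and Bd2: "\<And>x. (DB has_derivative D2B x) (at x)"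
    and \<rho>: "\<rho> > 0"
    and inO: "\<And>t. \<bar>t\<bar> < \<rho> \<Longrightarrow> x1 + t *\<^sub>R axis k 1 \<in> \<Omega>"
    and inO2: "\<And>t j. \<bar>t\<bar> < \<rho> \<Longrightarrow> x1 + t *\<^sub>R axis k 1 + h *\<^sub>R axis j 1 \<in> \<Omega>"
    and mx: "\<And>t. \<bar>t\<bar> < \<rho> \<Longrightarrow>
       (\<Sum>j\<in>UNIV. ((u (x1 + t *\<^sub>R axis k 1 + h *\<^sub>R axis j 1) - u (x1 + t *\<^sub>R axis k 1)) / h)\<^sup>2) + 2 * u (x1 + t *\<^sub>R axis k 1) + B (x1 + t *\<^sub>R axis k 1)
       \<le> (\<Sum>j\<in>UNIV. ((u (x1 + h *\<^sub>R axis j 1) - u x1) / h)\<^sup>2) + 2 * u x1 + B x1"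
  shows "(\<Sum>j\<in>UNIV. 2 * (((Du (x1 + h *\<^sub>R axis j 1) $ k - Du x1 $ k) / h) * ((Du (x1 + h *\<^sub>R axis j 1) $ k - Du x1 $ k) / h)
            + ((u (x1 + h *\<^sub>R axis j 1) - u x1) / h) * ((D2u (x1 + h *\<^sub>R axis j 1) (axis k 1) $ k - D2u x1 (axis k 1) $ k) / h)))
         + 2 * (D2u x1 (axis k 1) $ k) + D2B x1 (axis k 1) $ k \<le> 0"
proof -
  define a where "a j s = u ((x1 + h *\<^sub>R axis j 1) + s *\<^sub>R axis k 1)" for j s
  define bb where "bb s = u (x1 + s *\<^sub>R axis k 1)" for s
  define cc where "cc j s = Du ((x1 + h *\<^sub>R axis j 1) + s *\<^sub>R axis k 1) $ k" for j s
  define dd where "dd s = Du (x1 + s *\<^sub>R axis k 1) $ k" for s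
  define \<beta> where "\<beta> s = B (x1 + s *\<^sub>R axis k 1)" for s
  define \<beta>1 where "\<beta>1 s = DB (x1 + s *\<^sub>R axis k 1) $ k" for s
  have pt: "(x1 + h *\<^sub>R axis j 1) + t *\<^sub>R axis k 1 = x1 + t *\<^sub>R axis k 1 + h *\<^sub>R axis j 1" for t j
    by (simp add: algebra_simps)
  have da: "(a j has_real_derivative cc j t) (at t)" if "\<bar>t\<bar> < \<rho>" for j t
    unfolding a_def cc_def by (rule u_line) (use inO2[OF that, of j] in \<open>simp add: algebra_simps\<close>)
  have db: "(bb has_real_derivative dd t) (at t)" if "\<bar>t\<bar> < \<rho>" for t
    unfolding bb_def dd_def by (rule u_line) (use inO[OF that] in simp)
  have d\<beta>: "(\<beta> has_real_derivative \<beta>1 t) (at t)" for t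
    unfolding \<beta>_def \<beta>1_def using line_deriv[OF Bd1[of "x1 + t *\<^sub>R axis k 1"]] by (simp add: inner_axis)
  have dc: "(cc j has_real_derivative D2u (x1 + h *\<^sub>R axis j 1) (axis k 1) $ k) (at 0)" for j
    unfolding cc_def using Du_line[of "x1 + h *\<^sub>R axis j 1" 0 k k] inO2[of 0 j] \<rho> by (simp add: algebra_simps)
  have dd': "(dd has_real_derivative D2u x1 (axis k 1) $ k) (at 0)"
    unfolding dd_def using Du_line[of x1 0 k k] inO[of 0] \<rho> by simp
  have d\<beta>1: "(\<beta>1 has_real_derivative D2B x1 (axis k 1) $ k) (at 0)"
    unfolding \<beta>1_def using line_deriv[OF comp_deriv[OF Bd2[of "x1 + 0 *\<^sub>R axis k 1"]], of k] by simp
  have "(\<Sum>j\<in>UNIV. 2 * (((cc j 0 - dd 0) / h) * ((cc j 0 - dd 0) / h) + ((a j 0 - bb 0) / h) *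
          ((D2u (x1 + h *\<^sub>R axis j 1) (axis k 1) $ k - D2u x1 (axis k 1) $ k) / h))) + 2 * (D2u x1 (axis k 1) $ k) + D2B x1 (axis k 1) $ k \<le> 0"
  proof (rule second_deriv_local_max[OF \<rho>, of "\<lambda>s. (\<Sum>j\<in>UNIV. ((a j s - bb s) / h)\<^sup>2) + 2 * bb s + \<beta> s"
        "\<lambda>s. (\<Sum>j\<in>UNIV. 2 * ((a j s - bb s) / h) * ((cc j s - dd s) / h)) + 2 * dd s + \<beta>1 s"])
    fix t :: real assume t: "\<bar>t\<bar> < \<rho>"
    show "((\<lambda>s. (\<Sum>j\<in>UNIV. ((a j s - bb s) / h)\<^sup>2) + 2 * bb s + \<beta> s) has_real_derivative
        (\<Sum>j\<in>UNIV. 2 * ((a j t - bb t) / h) * ((cc j t - dd t) / h)) + 2 * dd t + \<beta>1 t) (at t)"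
      by (rule deriv_Q) (use da[OF t] db[OF t] d\<beta> in auto)
    show "(\<Sum>j\<in>UNIV. ((a j t - bb t) / h)\<^sup>2) + 2 * bb t + \<beta> t \<le> (\<Sum>j\<in>UNIV. ((a j 0 - bb 0) / h)\<^sup>2) + 2 * bb 0 + \<beta> 0"
      using mx[OF t] unfolding a_def bb_def \<beta>_def by (simp add: pt)
  next
    show "((\<lambda>s. (\<Sum>j\<in>UNIV. 2 * ((a j s - bb s) / h) * ((cc j s - dd s) / h)) + 2 * dd s + \<beta>1 s) has_real_derivative
      (\<Sum>j\<in>UNIV. 2 * (((cc j 0 - dd 0) / h) * ((cc j 0 - dd 0) / h) + ((a j 0 - bb 0) / h) *
          ((D2u (x1 + h *\<^sub>R axis j 1) (axis k 1) $ k - D2u x1 (axis k 1) $ k) / h))) + 2 * (D2u x1 (axis k 1) $ k) + D2B x1 (axis k 1) $ k) (at 0)"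
      by (rule deriv_Q1) (use da[of 0] db[of 0] dc dd' d\<beta>1 \<rho> in auto)
  qed
  thus ?thesis unfolding a_def bb_def cc_def dd_def by simp
qed

end


context torsion begin

lemma core:
  fixes A :: "(real^'n) set" and B :: "real^'n \<Rightarrow> real" and DB :: "real^'n \<Rightarrow> real^'n"
    and D2B :: "real^'n \<Rightarrow> real^'n \<Rightarrow> real^'n"
  assumes A: "open A" "closure A \<subseteq> \<Omega>"
    and Bd1: "\<And>x. (B has_derivative (\<lambda>v. DB x \<bullet> v)) (at x)"
    and Bd2: "\<And>x. (DB has_derivative D2B x) (at x)"
    and c: "c > 0" "\<And>x. x \<in> A \<Longrightarrow> F x + (\<Sum>k\<in>UNIV. D2B x (axis k 1) $ k) \<ge> c"
    and bd: "\<And>z. z \<in> frontier A \<Longrightarrow> P z + B z \<le> m"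
    and x: "x \<in> A"
  shows "P x + B x \<le> m"
proof -
  define K where "K = closure A"
  have K: "compact K" unfolding K_def
    using A(2) bdd bounded_subset compact_eq_bounded_closed by (metis closed_closure)
  have KO: "K \<subseteq> \<Omega>" using A K_def by simp
  obtain r where r: "r > 0" and K'c: "compact {x + y |x y. x \<in> K \<and> y \<in> cball 0 r}"
    and K'O: "{x + y |x y. x \<in> K \<and> y \<in> cball 0 r} \<subseteq> \<Omega>"
    using compact_margin[OF K opn KO] by blast
  define K' where "K' = {x + y |x y. x \<in> K \<and> y \<in> cball 0 r}"
  have inK: "x + s *\<^sub>R axis j 1 \<in> K'" if "x \<in> K" "0 \<le> s" "s \<le> r" for x s and j :: 'n
    unfolding K'_def using that by (intro CollectI exI[of _ x] exI[of _ "s *\<^sub>R axis j 1"]) auto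
  have K'O': "K' \<subseteq> \<Omega>" using K'O K'_def by simp
  have KK': "K \<subseteq> K'" using inK[of _ 0] r by auto
  have Oc: "\<Omega> \<subseteq> closure \<Omega>" by (rule closure_subset)
  have uc: "continuous_on K' u" using u_cont K'O' Oc continuous_on_subset by blast
  have Duc: "continuous_on K' Du" using Du_cont K'O' Oc continuous_on_subset by blast
  have xK: "x \<in> K" using x K_def closure_subset by blast
  obtain BD1 where BD1: "\<And>y j. y \<in> K \<Longrightarrow> \<bar>Du y $ j\<bar> \<le> BD1"
  proof -
    have "bounded (Du ` K)"
      using compact_imp_bounded compact_continuous_image continuous_on_subset[OF Duc KK'] K by blast
    then obtain b where "\<And>y. y \<in> K \<Longrightarrow> norm (Du y) \<le> b" unfolding bounded_iff by blast
    thus ?thesis using that component_le_norm_cart order_trans by metis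
  qed
  obtain BD2 where BD2: "\<And>y j k. y \<in> K \<Longrightarrow> \<bar>D2u y (axis j 1) $ k\<bar> \<le> BD2"
  proof -
    have "continuous_on K (\<lambda>y. \<Sum>j\<in>UNIV. \<Sum>k\<in>UNIV. \<bar>D2u y (axis j 1) $ k\<bar>)"
      by (intro continuous_on_sum continuous_on_rabs) (use hess_cont KO in \<open>auto intro: continuous_on_subset\<close>)
    hence "bounded ((\<lambda>y. \<Sum>j\<in>UNIV. \<Sum>k\<in>UNIV. \<bar>D2u y (axis j 1) $ k\<bar>) ` K)"
      using compact_imp_bounded compact_continuous_image K by blast
    then obtain b where b: "\<And>y. y \<in> K \<Longrightarrow> norm (\<Sum>j\<in>UNIV. \<Sum>k\<in>UNIV. \<bar>D2u y (axis j 1) $ k\<bar>) \<le> b"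
      unfolding bounded_iff by blast
    have "\<bar>D2u y (axis j 1) $ k\<bar> \<le> b" if "y \<in> K" for y j k
    proof -
      have "\<bar>D2u y (axis j 1) $ k\<bar> \<le> (\<Sum>k\<in>UNIV. \<bar>D2u y (axis j 1) $ k\<bar>)"
        by (rule member_le_sum) auto
      also have "\<dots> \<le> (\<Sum>j\<in>UNIV. \<Sum>k\<in>UNIV. \<bar>D2u y (axis j 1) $ k\<bar>)"
        by (rule member_le_sum[of j UNIV "\<lambda>j. \<Sum>k\<in>UNIV. \<bar>D2u y (axis j 1) $ k\<bar>"]) (auto intro: sum_nonneg)
      also have "\<dots> \<le> b" using b[OF that] by simp
      finally show ?thesis .
    qed
    thus ?thesis using that by blast
  qed
  have BD1p: "BD1 \<ge> 0" using BD1[OF xK] by (meson abs_ge_zero order_trans)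
  have BD2p: "BD2 \<ge> 0" using BD2[OF xK] by (meson abs_ge_zero order_trans)
  define N where "N = real CARD('n)"
  have Np: "N \<ge> 1" unfolding N_def by (simp add: Suc_leI)
  have main: "P x + B x \<le> m + \<delta>" if \<delta>: "\<delta> > 0" for \<delta>
  proof -
    define \<eta>1 where "\<eta>1 = min 1 ((\<delta>/2) / (N * (1 + 2 * BD1)))"
    define \<eta>2 where "\<eta>2 = min 1 ((c/4) / (N * N * (1 + 2 * BD2)))"
    have divc: "\<And>X a. X > 0 \<Longrightarrow> (a / X) * X = (a::real)" by simp
    have D1: "N * (1 + 2 * BD1) > 0" using Np BD1p by (simp add: add_pos_nonneg)
    have D2: "N * N * (1 + 2 * BD2) > 0" using Np BD2p by (simp add: add_pos_nonneg)
    have \<eta>1: "\<eta>1 > 0" "\<eta>1 \<le> 1" "N * (\<eta>1 * (1 + 2 * BD1)) \<le> \<delta>/2"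
    proof -
      show "\<eta>1 > 0" "\<eta>1 \<le> 1" using \<delta> D1 by (auto simp: \<eta>1_def)
      have "\<eta>1 * (N * (1 + 2 * BD1)) \<le> ((\<delta>/2) / (N * (1 + 2 * BD1))) * (N * (1 + 2 * BD1))"
        by (rule mult_right_mono) (use D1 in \<open>auto simp: \<eta>1_def\<close>)
      moreover have "((\<delta>/2) / (N * (1 + 2 * BD1))) * (N * (1 + 2 * BD1)) = \<delta>/2" using D1 divc by blast
      moreover have "N * (\<eta>1 * (1 + 2 * BD1)) = \<eta>1 * (N * (1 + 2 * BD1))" by (simp add: mult_ac)
      ultimately show "N * (\<eta>1 * (1 + 2 * BD1)) \<le> \<delta>/2" by linarith
    qed
    have \<eta>2: "\<eta>2 > 0" "\<eta>2 \<le> 1" "(N * N) * (\<eta>2 * (1 + 2 * BD2)) \<le> c/4"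
    proof -
      show "\<eta>2 > 0" "\<eta>2 \<le> 1" using c D2 by (auto simp: \<eta>2_def)
      have "\<eta>2 * (N * N * (1 + 2 * BD2)) \<le> ((c/4) / (N * N * (1 + 2 * BD2))) * (N * N * (1 + 2 * BD2))"
        by (rule mult_right_mono) (use D2 in \<open>auto simp: \<eta>2_def\<close>)
      moreover have "((c/4) / (N * N * (1 + 2 * BD2))) * (N * N * (1 + 2 * BD2)) = c/4" using D2 divc by blast
      moreover have "(N * N) * (\<eta>2 * (1 + 2 * BD2)) = \<eta>2 * (N * N * (1 + 2 * BD2))" by (simp add: mult_ac)
      ultimately show "(N * N) * (\<eta>2 * (1 + 2 * BD2)) \<le> c/4" by linarith
    qed
    have E1: "eventually (\<lambda>h. \<forall>y\<in>K. \<bar>(u (y + h *\<^sub>R axis j 1) - u y) / h - Du y $ j\<bar> \<le> \<eta>1) (at_right 0)"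
      for j :: 'n
    proof (rule dq_unif[OF K'c r, of K "axis j 1" u "\<lambda>y v. Du y \<bullet> v"])
      show "\<And>x s. x \<in> K \<Longrightarrow> 0 \<le> s \<Longrightarrow> s \<le> r \<Longrightarrow> x + s *\<^sub>R axis j 1 \<in> {x + y |x y. x \<in> K \<and> y \<in> cball 0 r}"
        using inK K'_def by auto
      show "\<And>y. y \<in> {x + y |x y. x \<in> K \<and> y \<in> cball 0 r} \<Longrightarrow> (u has_derivative (\<bullet>) (Du y)) (at y)"
        using grad K'O by auto
      show "\<And>y. y \<in> {x + y |x y. x \<in> K \<and> y \<in> cball 0 r} \<Longrightarrow> Du y \<bullet> axis j 1 = Du y $ j"
        by (simp add: inner_axis)
      show "continuous_on {x + y |x y. x \<in> K \<and> y \<in> cball 0 r} (\<lambda>y. Du y $ j)"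
        using Duc K'_def by (auto intro: continuous_intros)
    qed (use \<eta>1 in auto)
    have E2: "eventually (\<lambda>h. \<forall>y\<in>K. \<bar>(Du (y + h *\<^sub>R axis j 1) $ k - Du y $ k) / h - D2u y (axis j 1) $ k\<bar> \<le> \<eta>2) (at_right 0)"
      for j k :: 'n
    proof (rule dq_unif[OF K'c r, of K "axis j 1" "\<lambda>y. Du y $ k" "\<lambda>y v. D2u y v $ k"])
      show "\<And>x s. x \<in> K \<Longrightarrow> 0 \<le> s \<Longrightarrow> s \<le> r \<Longrightarrow> x + s *\<^sub>R axis j 1 \<in> {x + y |x y. x \<in> K \<and> y \<in> cball 0 r}"
        using inK K'_def by auto
      show "\<And>y. y \<in> {x + y |x y. x \<in> K \<and> y \<in> cball 0 r} \<Longrightarrow> ((\<lambda>y. Du y $ k) has_derivative (\<lambda>v. D2u y v $ k)) (at y)"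
        using hess K'O by (auto intro!: comp_deriv)
      show "continuous_on {x + y |x y. x \<in> K \<and> y \<in> cball 0 r} (\<lambda>y. D2u y (axis j 1) $ k)"
        using hess_cont K'O continuous_on_subset by blast
    qed (use \<eta>2 in auto)
    have "eventually (\<lambda>h. h \<in> {0<..<r}) (at_right 0)"
      by (rule eventually_at_right_real) (use r in auto)
    moreover have "eventually (\<lambda>h. \<forall>j\<in>UNIV. \<forall>y\<in>K. \<bar>(u (y + h *\<^sub>R axis j 1) - u y) / h - Du y $ j\<bar> \<le> \<eta>1) (at_right 0)"
      by (rule eventually_ball_finite) (use E1 in auto)
    moreover have "eventually (\<lambda>h. \<forall>jk\<in>UNIV. \<forall>y\<in>K. \<bar>(Du (y + h *\<^sub>R axis (fst jk) 1) $ (snd jk) - Du y $ (snd jk)) / h - D2u y (axis (fst jk) 1) $ (snd jk)\<bar> \<le> \<eta>2) (at_right 0)"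
      by (rule eventually_ball_finite) (use E2 in auto)
    ultimately have "eventually (\<lambda>h. h \<in> {0<..<r} \<and> (\<forall>j\<in>UNIV. \<forall>y\<in>K. \<bar>(u (y + h *\<^sub>R axis j 1) - u y) / h - Du y $ j\<bar> \<le> \<eta>1) \<and>
       (\<forall>jk\<in>UNIV. \<forall>y\<in>K. \<bar>(Du (y + h *\<^sub>R axis (fst jk) 1) $ (snd jk) - Du y $ (snd jk)) / h - D2u y (axis (fst jk) 1) $ (snd jk)\<bar> \<le> \<eta>2)) (at_right 0)"
      by (simp add: eventually_conj_iff)
    from eventually_happens'[OF trivial_limit_at_right_real this]
    obtain h where hh: "h \<in> {0<..<r}" "\<forall>j\<in>UNIV. \<forall>y\<in>K. \<bar>(u (y + h *\<^sub>R axis j 1) - u y) / h - Du y $ j\<bar> \<le> \<eta>1"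
       "\<forall>jk\<in>UNIV. \<forall>y\<in>K. \<bar>(Du (y + h *\<^sub>R axis (fst jk) 1) $ (snd jk) - Du y $ (snd jk)) / h - D2u y (axis (fst jk) 1) $ (snd jk)\<bar> \<le> \<eta>2"
      by blast
    have h: "0 < h" "h < r" using hh(1) by auto
    have h1: "\<And>j y. y \<in> K \<Longrightarrow> \<bar>(u (y + h *\<^sub>R axis j 1) - u y) / h - Du y $ j\<bar> \<le> \<eta>1"
      using hh(2) by blast
    have h2: "\<And>j k y. y \<in> K \<Longrightarrow> \<bar>(Du (y + h *\<^sub>R axis j 1) $ k - Du y $ k) / h - D2u y (axis j 1) $ k\<bar> \<le> \<eta>2"
      using hh(3) by fastforce
    have shK: "y + h *\<^sub>R axis j 1 \<in> K'" if "y \<in> K" for y j using inK[OF that, of h j] h by auto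
    have Pappr: "\<bar>((\<Sum>j\<in>UNIV. ((u (y + h *\<^sub>R axis j 1) - u y) / h)\<^sup>2) + 2 * u y) - P y\<bar> \<le> \<delta>/2"
      if y: "y \<in> K" for y
    proof -
      have "\<bar>(\<Sum>j\<in>UNIV. ((u (y + h *\<^sub>R axis j 1) - u y) / h)\<^sup>2) - (\<Sum>j\<in>UNIV. (Du y $ j)\<^sup>2)\<bar>
          \<le> real (card (UNIV::'n set)) * (\<eta>1 * (1 + 2 * BD1))"
        by (rule sq_approx) (use h1[OF y] BD1[OF y] \<eta>1 in auto)
      thus ?thesis using \<eta>1(3) unfolding P_sum N_def by simp
    qed
    have Happr: "(\<Sum>j\<in>UNIV. \<Sum>k\<in>UNIV. ((Du (y + h *\<^sub>R axis j 1) $ k - Du y $ k) / h)\<^sup>2)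
        \<ge> (\<Sum>j\<in>UNIV. \<Sum>k\<in>UNIV. (D2u y (axis j 1) $ k)\<^sup>2) - c/4" if y: "y \<in> K" for y
    proof -
      have "\<bar>(\<Sum>jk\<in>UNIV. ((Du (y + h *\<^sub>R axis (fst jk) 1) $ (snd jk) - Du y $ (snd jk)) / h)\<^sup>2)
           - (\<Sum>jk\<in>UNIV. (D2u y (axis (fst jk) 1) $ (snd jk))\<^sup>2)\<bar>
          \<le> real (card (UNIV::('n\<times>'n) set)) * (\<eta>2 * (1 + 2 * BD2))"
        by (rule sq_approx) (use h2[OF y] BD2[OF y] \<eta>2 in auto)
      moreover have "real (card (UNIV::('n\<times>'n) set)) = N * N" by (simp add: N_def UNIV_Times_UNIV[symmetric] card_cartesian_product del: UNIV_Times_UNIV)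
      moreover have sw: "(\<Sum>jk\<in>UNIV. f (fst jk) (snd jk)) = (\<Sum>j\<in>UNIV. \<Sum>k\<in>UNIV. f j k)" for f :: "'n \<Rightarrow> 'n \<Rightarrow> real"
        by (simp add: sum.cartesian_product UNIV_Times_UNIV[symmetric] case_prod_beta del: UNIV_Times_UNIV)
      note sw1 = sw[of "\<lambda>j k. ((Du (y + h *\<^sub>R axis j 1) $ k - Du y $ k) / h)\<^sup>2"]
      note sw2 = sw[of "\<lambda>j k. (D2u y (axis j 1) $ k)\<^sup>2"]
      ultimately show ?thesis using \<eta>2(3) sw1 sw2 by simp
    qed
    define Q where "Q y = (\<Sum>j\<in>UNIV. ((u (y + h *\<^sub>R axis j 1) - u y) / h)\<^sup>2) + 2 * u y + B y" for y
    have Bc: "continuous_on UNIV B"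
      using Bd1 has_derivative_continuous continuous_at_imp_continuous_on by blast
    have Qc: "continuous_on K Q"
    proof -
      have "continuous_on K (\<lambda>y. u (y + h *\<^sub>R axis j 1))" for j
        by (rule continuous_on_compose2[OF uc]) (use shK in \<open>auto intro!: continuous_intros\<close>)
      moreover have "continuous_on K u" using uc KK' continuous_on_subset by blast
      ultimately show ?thesis unfolding Q_def
        by (intro continuous_intros continuous_on_subset[OF Bc]) (use h in auto)
    qed
    obtain x1 where x1: "x1 \<in> K" "\<And>y. y \<in> K \<Longrightarrow> Q y \<le> Q x1"
      using continuous_attains_sup[OF K _ Qc] xK by blast
    show ?thesis
    proof (cases "x1 \<in> A")
      case False
      hence fr: "x1 \<in> frontier A" using x1(1) A(1) unfolding K_def frontier_def by (simp add: interior_open)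
      have "P x + B x \<le> Q x + \<delta>/2" using Pappr[OF xK] unfolding Q_def by linarith
      also have "\<dots> \<le> Q x1 + \<delta>/2" using x1(2)[OF xK] by simp
      also have "\<dots> \<le> P x1 + B x1 + \<delta>" using Pappr[OF x1(1)] unfolding Q_def by linarith
      also have "\<dots> \<le> m + \<delta>" using bd[OF fr] by simp
      finally show ?thesis .
    next
      case True
      obtain \<rho> where \<rho>: "\<rho> > 0" "ball x1 \<rho> \<subseteq> A" using A(1) True open_contains_ball by blast
      have inA: "x1 + t *\<^sub>R axis k 1 \<in> A" if "\<bar>t\<bar> < \<rho>" for t k
        using \<rho>(2) that by (auto simp: dist_norm)
      have AK: "A \<subseteq> K" unfolding K_def by (rule closure_subset)
      have sec: "(\<Sum>j\<in>UNIV. 2 * (((Du (x1 + h *\<^sub>R axis j 1) $ k - Du x1 $ k) / h) * ((Du (x1 + h *\<^sub>R axis j 1) $ k - Du x1 $ k) / h)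
            + ((u (x1 + h *\<^sub>R axis j 1) - u x1) / h) * ((D2u (x1 + h *\<^sub>R axis j 1) (axis k 1) $ k - D2u x1 (axis k 1) $ k) / h)))
         + 2 * (D2u x1 (axis k 1) $ k) + D2B x1 (axis k 1) $ k \<le> 0" for k
      proof (rule Qsecond[OF Bd1 Bd2 \<rho>(1)])
        fix t assume t: "\<bar>t\<bar> < \<rho>"
        show "x1 + t *\<^sub>R axis k 1 \<in> \<Omega>" using inA[OF t] AK KO by blast
        show "x1 + t *\<^sub>R axis k 1 + h *\<^sub>R axis j 1 \<in> \<Omega>" for j using shK[of "x1 + t *\<^sub>R axis k 1" j] inA[OF t] AK K'O' by blast
        show "(\<Sum>j\<in>UNIV. ((u (x1 + t *\<^sub>R axis k 1 + h *\<^sub>R axis j 1) - u (x1 + t *\<^sub>R axis k 1)) / h)\<^sup>2) + 2 * u (x1 + t *\<^sub>R axis k 1) + B (x1 + t *\<^sub>R axis k 1)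
          \<le> (\<Sum>j\<in>UNIV. ((u (x1 + h *\<^sub>R axis j 1) - u x1) / h)\<^sup>2) + 2 * u x1 + B x1"
          using x1(2)[of "x1 + t *\<^sub>R axis k 1"] inA[OF t] AK unfolding Q_def by blast
      qed
      define Dq where "Dq j k = (Du (x1 + h *\<^sub>R axis j 1) $ k - Du x1 $ k) / h" for j k
      define w where "w j = (u (x1 + h *\<^sub>R axis j 1) - u x1) / h" for j
      define S2 where "S2 j k = D2u (x1 + h *\<^sub>R axis j 1) (axis k 1) $ k" for j k
      define T where "T k = D2u x1 (axis k 1) $ k" for k
      define L where "L k = (\<Sum>j\<in>UNIV. 2 * (Dq j k * Dq j k + w j * ((S2 j k - T k) / h))) + 2 * T k + D2B x1 (axis k 1) $ k" for k
      have Lle: "L k \<le> 0" for k using sec[of k] unfolding L_def Dq_def w_def S2_def T_def .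
      have x1O: "x1 \<in> \<Omega>" using True AK KO by blast
      have x1hO: "x1 + h *\<^sub>R axis j 1 \<in> \<Omega>" for j using shK[OF x1(1)] K'O' by blast
      have ST: "(\<Sum>k\<in>UNIV. S2 j k) = (\<Sum>k\<in>UNIV. T k)" for j
        using pde x1O x1hO[of j] unfolding S2_def T_def by simp
      have Tsum: "(\<Sum>k\<in>UNIV. T k) = - N" using pde x1O unfolding T_def N_def by simp
      have Lk: "L k = (\<Sum>j\<in>UNIV. 2 * (Dq j k)\<^sup>2) + (\<Sum>j\<in>UNIV. 2 * (w j * ((S2 j k - T k) / h))) + 2 * T k + D2B x1 (axis k 1) $ k" for k
        unfolding L_def by (simp add: sum.distrib distrib_left power2_eq_square)
      have mid: "(\<Sum>k\<in>UNIV. \<Sum>j\<in>UNIV. 2 * (w j * ((S2 j k - T k) / h))) = 0"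
      proof -
        have "(\<Sum>k\<in>UNIV. \<Sum>j\<in>UNIV. 2 * (w j * ((S2 j k - T k) / h))) = (\<Sum>j\<in>UNIV. \<Sum>k\<in>UNIV. 2 * (w j * ((S2 j k - T k) / h)))"
          by (rule sum.swap)
        also have "\<dots> = (\<Sum>j\<in>UNIV. (2 * w j / h) * ((\<Sum>k\<in>UNIV. S2 j k) - (\<Sum>k\<in>UNIV. T k)))"
          by (intro sum.cong refl) (simp add: sum_distrib_left sum_subtractf[symmetric] algebra_simps diff_divide_distrib)
        also have "\<dots> = 0" using ST by simp
        finally show ?thesis .
      qed
      have "(\<Sum>k\<in>UNIV. L k) = 2 * (\<Sum>j\<in>UNIV. \<Sum>k\<in>UNIV. (Dq j k)\<^sup>2) + 2 * (\<Sum>k\<in>UNIV. T k) + (\<Sum>k\<in>UNIV. D2B x1 (axis k 1) $ k)"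
      proof -
        have "(\<Sum>k\<in>UNIV. L k) = (\<Sum>k\<in>UNIV. \<Sum>j\<in>UNIV. 2 * (Dq j k)\<^sup>2) + (\<Sum>k\<in>UNIV. \<Sum>j\<in>UNIV. 2 * (w j * ((S2 j k - T k) / h)))
            + 2 * (\<Sum>k\<in>UNIV. T k) + (\<Sum>k\<in>UNIV. D2B x1 (axis k 1) $ k)"
          unfolding Lk by (simp add: sum.distrib sum_distrib_left)
        also have "(\<Sum>k\<in>UNIV. \<Sum>j\<in>UNIV. 2 * (Dq j k)\<^sup>2) = 2 * (\<Sum>j\<in>UNIV. \<Sum>k\<in>UNIV. (Dq j k)\<^sup>2)"
          by (subst sum.swap) (simp add: sum_distrib_left)
        finally show ?thesis using mid by simp
      qed
      moreover have "(\<Sum>j\<in>UNIV. \<Sum>k\<in>UNIV. (Dq j k)\<^sup>2) \<ge> (\<Sum>j\<in>UNIV. \<Sum>k\<in>UNIV. (D2u x1 (axis j 1) $ k)\<^sup>2) - c/4"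
        using Happr[OF x1(1)] unfolding Dq_def .
      moreover have "F x1 + (\<Sum>k\<in>UNIV. D2B x1 (axis k 1) $ k) \<ge> c" using c(2) True by blast
      moreover have "(\<Sum>k\<in>UNIV. L k) \<le> 0" using Lle by (simp add: sum_nonpos)
      ultimately have False using c(1) Tsum unfolding F_def N_def by linarith
      thus ?thesis ..

    qed
  qed
  show ?thesis using main by (meson field_le_epsilon)
qed

end


lemma quad_d1: "((\<lambda>y::real^'n. \<kappa> * ((y - a) \<bullet> (y - a))) has_derivative (\<lambda>v. ((2 * \<kappa>) *\<^sub>R (y - a)) \<bullet> v)) (at y)"
  apply (rule derivative_eq_intros refl | assumption)+
  apply (simp add: algebra_simps inner_commute)
  done

lemma quad_d2: "((\<lambda>y::real^'n. (2 * \<kappa>) *\<^sub>R (y - a)) has_derivative (\<lambda>v. (2 * \<kappa>) *\<^sub>R v)) (at y)"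
  by (auto intro!: derivative_eq_intros)

lemma quad_lap: "(\<Sum>k\<in>UNIV. ((2 * \<kappa>) *\<^sub>R (axis k 1 :: real^'n)) $ k) = 2 * \<kappa> * real CARD('n)"
  by simp

context torsion begin

lemma P_cont: "continuous_on (closure \<Omega>) P"
  unfolding P_def using u_cont Du_cont by (intro continuous_intros) auto

lemma weak_P:
  assumes G: "\<And>z. z \<in> frontier \<Omega> \<Longrightarrow> P z \<le> G" and x: "x \<in> \<Omega>"
  shows "P x \<le> G"
proof -
  obtain Rb where Rb: "\<And>y. y \<in> closure \<Omega> \<Longrightarrow> y \<bullet> y \<le> Rb" "Rb \<ge> 0"
  proof -
    obtain b where b: "\<And>y. y \<in> closure \<Omega> \<Longrightarrow> norm y \<le> b"
      using bounded_closure[OF bdd] unfolding bounded_iff by blast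
    have "y \<bullet> y \<le> b * b" if "y \<in> closure \<Omega>" for y
    proof -
      have "norm y * norm y \<le> b * b" using b[OF that] by (intro mult_mono) (auto intro: order_trans[OF norm_ge_zero])
      thus ?thesis by (simp add: power2_norm_eq_inner[symmetric] power2_eq_square)
    qed
    thus ?thesis using that[of "b * b"] by simp
  qed
  have main: "P x \<le> G + \<delta> + \<epsilon> * Rb" if \<delta>: "\<delta> > 0" and \<epsilon>: "\<epsilon> > 0" for \<delta> \<epsilon>
  proof -
    define C where "C = {y \<in> closure \<Omega>. P y \<ge> G + \<delta>}"
    have Cc: "compact C"
    proof -
      have "closed C" unfolding C_def
        using continuous_closed_preimage[OF P_cont closed_closure, of "{G + \<delta>..}"] by (simp add: vimage_def Int_def)
      moreover have "bounded C" by (rule bounded_subset[OF bounded_closure[OF bdd]]) (auto simp: C_def)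
      ultimately show ?thesis by (simp add: compact_eq_bounded_closed)
    qed
    have CO: "C \<subseteq> \<Omega>"
    proof
      fix y assume "y \<in> C"
      hence y1: "y \<in> closure \<Omega>" "P y \<ge> G + \<delta>" unfolding C_def by simp_all
      have "y \<notin> frontier \<Omega>"
      proof
        assume "y \<in> frontier \<Omega>"
        from G[OF this] y1(2) \<delta> show False by linarith
      qed
      note y1 this
      thus "y \<in> \<Omega>" using closure_Un_frontier by blast
    qed
    define K0 where "K0 = insert x C"
    have K0c: "compact K0" using Cc unfolding K0_def by simp
    have K0O: "K0 \<subseteq> \<Omega>" using CO x unfolding K0_def by simp
    obtain r where r: "r > 0" "compact {a + b |a b. a \<in> K0 \<and> b \<in> cball 0 r}" "{a + b |a b. a \<in> K0 \<and> b \<in> cball 0 r} \<subseteq> \<Omega>"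
      using compact_margin[OF K0c opn K0O] by blast
    define A where "A = (\<Union>k\<in>K0. ball k r)"
    have Ao: "open A" unfolding A_def by (rule open_Union) auto
    have AS: "A \<subseteq> {a + b |a b. a \<in> K0 \<and> b \<in> cball 0 r}"
    proof
      fix y assume "y \<in> A"
      then obtain k where "k \<in> K0" "dist k y < r" unfolding A_def by auto
      thus "y \<in> {a + b |a b. a \<in> K0 \<and> b \<in> cball 0 r}"
        by (intro CollectI exI[of _ k] exI[of _ "y - k"]) (auto simp: dist_norm)
    qed
    have clA: "closure A \<subseteq> \<Omega>"
      by (rule order_trans[OF closure_minimal[OF AS compact_imp_closed[OF r(2)]] r(3)])
    have CA: "C \<subseteq> A" "x \<in> A" using r(1) unfolding A_def K0_def by auto
    have "P x + \<epsilon> * ((x - 0) \<bullet> (x - 0)) \<le> G + \<delta> + \<epsilon> * Rb"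
    proof (rule core[OF Ao clA quad_d1 quad_d2, of "2 * \<epsilon> * real CARD('n)"])
      show "0 < 2 * \<epsilon> * real CARD('n)" using \<epsilon> by simp
      fix y assume y: "y \<in> A"
      show "2 * \<epsilon> * real CARD('n) \<le> F y + (\<Sum>k\<in>UNIV. ((2 * \<epsilon>) *\<^sub>R (axis k 1 :: real^'n)) $ k)"
      proof -
        have "y \<in> \<Omega>" using y clA closure_subset by blast
        from F_nonneg[OF this] show ?thesis by (simp add: quad_lap)
      qed
    next
      fix z assume z: "z \<in> frontier A"
      hence zc: "z \<in> closure A" "z \<notin> A" using Ao by (auto simp: frontier_def interior_open)
      hence zO: "z \<in> \<Omega>" using clA by blast
      hence "z \<notin> C" "z \<in> closure \<Omega>" using CA zc closure_subset by blast+
      hence "P z < G + \<delta>" unfolding C_def by auto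
      moreover have "z \<bullet> z \<le> Rb" using Rb(1) \<open>z \<in> closure \<Omega>\<close> .
      ultimately show "P z + \<epsilon> * ((z - 0) \<bullet> (z - 0)) \<le> G + \<delta> + \<epsilon> * Rb"
      proof -
        have "\<epsilon> * (z \<bullet> z) \<le> \<epsilon> * Rb" using \<open>z \<bullet> z \<le> Rb\<close> \<epsilon> by (intro mult_left_mono) auto
        thus ?thesis using \<open>P z < G + \<delta>\<close> by simp
      qed
    next
      show "x \<in> A" using CA(2) .
    qed
    moreover have "\<epsilon> * (x \<bullet> x) \<ge> 0" using \<epsilon> by simp
    ultimately show ?thesis by simp
  qed
  show ?thesis
  proof (rule field_le_epsilon)
    fix e :: real assume e: "e > 0"
    have "P x \<le> G + e/2 + (e / (2 * (Rb + 1))) * Rb" using main[of "e/2" "e / (2 * (Rb + 1))"] e Rb(2) by simp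
    also have "(e / (2 * (Rb + 1))) * Rb \<le> e/2"
    proof -
      have "(e / (2 * (Rb + 1))) * Rb = (e/2) * (Rb / (Rb + 1))" by simp
      also have "\<dots> \<le> (e/2) * 1" using e Rb(2) by (intro mult_left_mono) auto
      finally show ?thesis by simp
    qed
    finally show "P x \<le> G + e" by simp
  qed
qed

end


definition hE :: "real \<Rightarrow> real^'n \<Rightarrow> real^'n \<Rightarrow> real" where
  "hE \<alpha> z y = exp (- \<alpha> * ((y - z) \<bullet> (y - z)))"

lemma hE_deriv: "(hE \<alpha> z has_derivative (\<lambda>v. (- 2 * \<alpha> * hE \<alpha> z y) * ((y - z) \<bullet> v))) (at y)"
  unfolding hE_def
  apply (rule derivative_eq_intros refl | assumption)+
  apply (simp add: algebra_simps inner_commute)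
  done

lemma hb1: "((\<lambda>y. \<epsilon> * hE \<alpha> z y - c0) has_derivative
   (\<lambda>v. ((- 2 * \<alpha> * \<epsilon> * hE \<alpha> z y) *\<^sub>R (y - z)) \<bullet> v)) (at y)"
  apply (rule derivative_eq_intros hE_deriv refl | assumption)+
  apply (simp add: algebra_simps)
  done

lemma hb2: "((\<lambda>y. (- 2 * \<alpha> * \<epsilon> * hE \<alpha> z y) *\<^sub>R (y - z)) has_derivative
   (\<lambda>v. (4 * \<alpha>\<^sup>2 * \<epsilon> * hE \<alpha> z y * ((y - z) \<bullet> v)) *\<^sub>R (y - z) + (- 2 * \<alpha> * \<epsilon> * hE \<alpha> z y) *\<^sub>R v)) (at y)"
  apply (rule derivative_eq_intros hE_deriv refl | assumption)+
  apply (simp add: algebra_simps power2_eq_square)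
  done

lemma hlap: "(\<Sum>k\<in>UNIV. ((4 * \<alpha>\<^sup>2 * \<epsilon> * hE \<alpha> z y * ((y - z) \<bullet> axis k 1)) *\<^sub>R (y - z) + (- 2 * \<alpha> * \<epsilon> * hE \<alpha> z y) *\<^sub>R (axis k 1 :: real^'n)) $ k)
   = \<epsilon> * hE \<alpha> z y * (4 * \<alpha>\<^sup>2 * ((y - z) \<bullet> (y - z)) - 2 * \<alpha> * real CARD('n))"
proof -
  have "(\<Sum>k\<in>UNIV. ((4 * \<alpha>\<^sup>2 * \<epsilon> * hE \<alpha> z y * ((y - z) \<bullet> axis k 1)) *\<^sub>R (y - z) + (- 2 * \<alpha> * \<epsilon> * hE \<alpha> z y) *\<^sub>R (axis k 1 :: real^'n)) $ k)
     = (\<Sum>k\<in>UNIV. (4 * \<alpha>\<^sup>2 * \<epsilon> * hE \<alpha> z y) * ((y - z) $ k * (y - z) $ k) + (- 2 * \<alpha> * \<epsilon> * hE \<alpha> z y))"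
    by (intro sum.cong refl) (simp add: inner_axis)
  also have "\<dots> = (4 * \<alpha>\<^sup>2 * \<epsilon> * hE \<alpha> z y) * ((y - z) \<bullet> (y - z)) + (- 2 * \<alpha> * \<epsilon> * hE \<alpha> z y) * real CARD('n)"
    by (simp add: sum.distrib sum_subtractf sum_distrib_left inner_vec_def)
  finally show ?thesis by (simp add: algebra_simps)
qed


context torsion begin

lemma P_deriv:
  assumes "x \<in> \<Omega>"
  shows "(P has_derivative (\<lambda>v. Du x \<bullet> D2u x v + D2u x v \<bullet> Du x + 2 * (Du x \<bullet> v))) (at x)"
proof -
  have g: "(u has_derivative (\<lambda>h. Du x \<bullet> h)) (at x)" and h: "(Du has_derivative D2u x) (at x)"
    using grad hess assms by auto
  have "((\<lambda>y. Du y \<bullet> Du y + 2 * u y) has_derivative (\<lambda>v. Du x \<bullet> D2u x v + D2u x v \<bullet> Du x + 2 * (Du x \<bullet> v))) (at x)"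
    by (rule derivative_eq_intros g h refl)+
  thus ?thesis unfolding P_def[abs_def] .
qed

lemma P_contO: "continuous_on \<Omega> P"
  using P_cont closure_subset continuous_on_subset by blast

lemma strong_P:
  assumes conn: "connected \<Omega>" and le: "\<And>x. x \<in> \<Omega> \<Longrightarrow> P x \<le> m"
    and x0: "x0 \<in> \<Omega>" "P x0 = m"
  shows "\<And>x. x \<in> \<Omega> \<Longrightarrow> P x = m"
proof -
  define S where "S = {x \<in> \<Omega>. P x = m}"
  have S_open: "open S"
  proof (unfold open_contains_ball, intro ballI)
    fix xs assume xs: "xs \<in> S"
    show "\<exists>e>0. ball xs e \<subseteq> S"
    proof (rule ccontr)
      assume nb: "\<not> (\<exists>e>0. ball xs e \<subseteq> S)"
      obtain \<rho> where \<rho>: "\<rho> > 0" "cball xs \<rho> \<subseteq> \<Omega>" using xs opn open_contains_cball unfolding S_def by blast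
      obtain z where z: "z \<in> ball xs (\<rho>/2)" "z \<notin> S" using nb \<rho>(1)
        by (metis half_gt_zero subsetI)
      have zO: "z \<in> \<Omega>" using z(1) \<rho> by (intro subsetD[OF \<rho>(2)]) auto
      have Pz: "P z < m" using z(2) zO le[OF zO] unfolding S_def by force
      define T where "T = {y \<in> cball z (\<rho>/2). P y = m}"
      have czO: "cball z (\<rho>/2) \<subseteq> \<Omega>"
      proof
        fix y assume "y \<in> cball z (\<rho>/2)"
        hence "dist xs y \<le> \<rho>" using z(1) dist_triangle[of xs y z] by (auto simp: dist_commute)
        thus "y \<in> \<Omega>" using \<rho>(2) by auto
      qed
      have Tc: "closed T" unfolding T_def
        by (rule continuous_closed_preimage_constant[OF continuous_on_subset[OF P_contO czO] closed_cball])
      have xsT: "xs \<in> T" using xs z(1) unfolding T_def S_def by (auto simp: dist_commute)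
      obtain x1 where x1: "x1 \<in> T" "\<And>y. y \<in> T \<Longrightarrow> dist z x1 \<le> dist z y"
        using distance_attains_inf[OF Tc, of z] xsT by blast
      define R where "R = dist z x1"
      have Px1: "P x1 = m" and x1c: "x1 \<in> cball z (\<rho>/2)" using x1(1) unfolding T_def by auto
      have x1O: "x1 \<in> \<Omega>" using x1c czO by blast
      have Rpos: "R > 0" using Px1 Pz unfolding R_def by (metis dist_pos_lt less_irrefl)
      have Rle: "R \<le> \<rho>/2" using x1c unfolding R_def by simp
      have ballP: "P y < m" if "y \<in> ball z R" for y
      proof -
        have yc: "y \<in> cball z (\<rho>/2)" using that Rle by auto
        have yO: "y \<in> \<Omega>" using yc czO by blast
        have "P y \<noteq> m"
        proof
          assume "P y = m"
          hence "y \<in> T" using yc unfolding T_def by simp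
          from x1(2)[OF this] that show False unfolding R_def by simp
        qed
        thus ?thesis using le[OF yO] by simp
      qed
      have cRO: "cball z R \<subseteq> \<Omega>" using czO Rle by auto
      obtain ys where ys: "ys \<in> sphere z (R/2)" "\<And>y. y \<in> sphere z (R/2) \<Longrightarrow> P y \<le> P ys"
      proof -
        have "sphere z (R/2) \<subseteq> \<Omega>" using cRO Rpos by auto
        hence "continuous_on (sphere z (R/2)) P" using P_contO continuous_on_subset by blast
        moreover have "sphere z (R/2) \<noteq> {}" using Rpos by simp
        ultimately show ?thesis using continuous_attains_sup[OF compact_sphere] that by blast
      qed
      define \<gamma> where "\<gamma> = m - P ys"
      have \<gamma>: "\<gamma> > 0" using ballP[of ys] ys(1) Rpos unfolding \<gamma>_def by simp
      define N where "N = real CARD('n)"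
      define \<alpha> where "\<alpha> = (2 * N + 1) / R\<^sup>2"
      define \<epsilon> where "\<epsilon> = \<gamma> / 2"
      define c0 where "c0 = exp (- \<alpha> * R\<^sup>2)"
      have \<alpha>: "\<alpha> > 0" using Rpos unfolding \<alpha>_def N_def by (simp add: add_pos_nonneg)
      have \<epsilon>: "\<epsilon> > 0" using \<gamma> unfolding \<epsilon>_def by simp
      define A where "A = {y. R/2 < dist z y \<and> dist z y < R}"
      have Ao: "open A" unfolding A_def
        by (intro open_Collect_conj open_Collect_less continuous_intros)
      have clA: "closure A \<subseteq> {y. R/2 \<le> dist z y \<and> dist z y \<le> R}"
        by (rule closure_minimal) (auto simp: A_def intro!: closed_Collect_conj closed_Collect_le continuous_intros)
      have clAO: "closure A \<subseteq> \<Omega>"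
      proof
        fix y assume "y \<in> closure A"
        hence "y \<in> cball z R" using clA by auto
        thus "y \<in> \<Omega>" using cRO by blast
      qed
      have core_app: "P y + (\<epsilon> * hE \<alpha> z y - \<epsilon> * c0) \<le> m" if y: "y \<in> A" for y
      proof (rule core[OF Ao clAO hb1 hb2, of "\<epsilon> * \<alpha> * c0"])
        show "0 < \<epsilon> * \<alpha> * c0" using \<epsilon> \<alpha> unfolding c0_def by simp
      next
        fix y assume y: "y \<in> A"
        have yO: "y \<in> \<Omega>" using y clAO closure_subset by blast
        have d: "R/2 < dist z y" "dist z y < R" using y unfolding A_def by auto
        have n2: "(y - z) \<bullet> (y - z) = (dist z y)\<^sup>2" by (simp add: dist_norm power2_norm_eq_inner norm_minus_commute)
        have "(R/2)\<^sup>2 \<le> (dist z y)\<^sup>2" using d Rpos by (intro power_mono) auto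
        hence n3: "R\<^sup>2 \<le> 4 * ((y - z) \<bullet> (y - z))" using n2 by (simp add: power_divide)
        have n4: "(y - z) \<bullet> (y - z) \<le> R\<^sup>2" using n2 d by (simp add: power_mono)
        have "hE \<alpha> z y \<ge> c0" unfolding hE_def c0_def using n4 \<alpha> by simp
        have "\<alpha> * \<alpha> * R\<^sup>2 = \<alpha> * (2 * N + 1)" using Rpos unfolding \<alpha>_def by (simp add: power2_eq_square)
        hence "4 * \<alpha>\<^sup>2 * ((y - z) \<bullet> (y - z)) - 2 * \<alpha> * N \<ge> \<alpha>"
          using n3 \<alpha> mult_left_mono[OF n3, of "\<alpha> * \<alpha>"] by (simp add: power2_eq_square algebra_simps)
        hence Xa: "4 * \<alpha>\<^sup>2 * ((y - z) \<bullet> (y - z)) - 2 * \<alpha> * N \<ge> \<alpha>" .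
        have c0p: "c0 > 0" unfolding c0_def by simp
        have "c0 * \<alpha> \<le> hE \<alpha> z y * (4 * \<alpha>\<^sup>2 * ((y - z) \<bullet> (y - z)) - 2 * \<alpha> * N)"
          by (rule mult_mono) (use \<open>hE \<alpha> z y \<ge> c0\<close> Xa c0p \<alpha> in auto)
        hence "\<epsilon> * (c0 * \<alpha>) \<le> \<epsilon> * (hE \<alpha> z y * (4 * \<alpha>\<^sup>2 * ((y - z) \<bullet> (y - z)) - 2 * \<alpha> * N))"
          by (rule mult_left_mono) (use \<epsilon> in simp)
        moreover have "(\<Sum>k\<in>UNIV. ((4 * \<alpha>\<^sup>2 * \<epsilon> * hE \<alpha> z y * ((y - z) \<bullet> axis k 1)) *\<^sub>R (y - z) + (- 2 * \<alpha> * \<epsilon> * hE \<alpha> z y) *\<^sub>R (axis k 1 :: real^'n)) $ k)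
           = \<epsilon> * (hE \<alpha> z y * (4 * \<alpha>\<^sup>2 * ((y - z) \<bullet> (y - z)) - 2 * \<alpha> * N))"
          unfolding hlap N_def by (simp only: mult.assoc)
        ultimately show "\<epsilon> * \<alpha> * c0 \<le> F y + (\<Sum>k\<in>UNIV. ((4 * \<alpha>\<^sup>2 * \<epsilon> * hE \<alpha> z y * ((y - z) \<bullet> axis k 1)) *\<^sub>R (y - z) + (- 2 * \<alpha> * \<epsilon> * hE \<alpha> z y) *\<^sub>R (axis k 1 :: real^'n)) $ k)"
          using F_nonneg[OF yO] by (simp add: mult_ac)
      next
        fix w assume w: "w \<in> frontier A"
        hence wc: "w \<in> closure A" "w \<notin> A" using Ao by (auto simp: frontier_def interior_open)
        hence wO: "w \<in> \<Omega>" using clAO by blast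
        have "dist z w = R/2 \<or> dist z w = R" using wc clA unfolding A_def by auto
        thus "P w + (\<epsilon> * hE \<alpha> z w - \<epsilon> * c0) \<le> m"
        proof
          assume "dist z w = R/2"
          hence "w \<in> sphere z (R/2)" by simp
          hence "P w \<le> m - \<gamma>" using ys(2) unfolding \<gamma>_def by simp
          moreover have "hE \<alpha> z w \<le> 1" unfolding hE_def using \<alpha> by simp
          moreover have "c0 \<ge> 0" unfolding c0_def by simp
          ultimately have "\<epsilon> * hE \<alpha> z w \<le> \<epsilon> * 1" "\<epsilon> * c0 \<ge> 0" "P w \<le> m - \<gamma>"
            using \<epsilon> by (auto intro: mult_left_mono)
          thus ?thesis using \<gamma> unfolding \<epsilon>_def by linarith
        next
          assume "dist z w = R"
          hence "(w - z) \<bullet> (w - z) = R\<^sup>2" by (simp add: dist_norm power2_norm_eq_inner[symmetric] norm_minus_commute)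
          hence "hE \<alpha> z w = c0" unfolding hE_def c0_def by simp
          thus ?thesis using le[OF wO] by simp
        qed
      qed (use y in auto)
      text \<open>Hopf contradiction at x1\<close>
      define d where "d = z - x1"
      define \<psi> where "\<psi> t = P (x1 + t *\<^sub>R d)" for t
      have "x1 + 0 *\<^sub>R d \<in> \<Omega>" using x1O by simp
      from line_deriv[OF P_deriv[OF this]]
      have "(\<psi> has_real_derivative (Du (x1 + 0 *\<^sub>R d) \<bullet> D2u (x1 + 0 *\<^sub>R d) d + D2u (x1 + 0 *\<^sub>R d) d \<bullet> Du (x1 + 0 *\<^sub>R d) + 2 * (Du (x1 + 0 *\<^sub>R d) \<bullet> d))) (at 0)"
        unfolding \<psi>_def .
      then obtain l where l: "(\<psi> has_real_derivative l) (at 0)" by blast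
      obtain e1 where e1: "e1 > 0" "ball x1 e1 \<subseteq> \<Omega>" using x1O opn open_contains_ball by blast
      have l0: "l = 0"
      proof (rule DERIV_local_max[OF l, of "e1 / (norm d + 1)"])
        show "0 < e1 / (norm d + 1)" using e1 by (simp add: add_nonneg_pos)
        show "\<forall>y. \<bar>0 - y\<bar> < e1 / (norm d + 1) \<longrightarrow> \<psi> y \<le> \<psi> 0"
        proof safe
          fix t assume t: "\<bar>0 - t\<bar> < e1 / (norm d + 1)"
          have "norm (t *\<^sub>R d) = \<bar>t\<bar> * norm d" by simp
          also have "\<dots> \<le> \<bar>t\<bar> * (norm d + 1)" by (rule mult_left_mono) auto
          also have "\<dots> < e1"
          proof -
            have nd: "0 < norm d + 1" by (simp add: add_nonneg_pos)
            from t have "\<bar>t\<bar> < e1 / (norm d + 1)" by simp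
            with pos_less_divide_eq[OF nd] show ?thesis by blast
          qed
          finally have "x1 + t *\<^sub>R d \<in> \<Omega>" using e1(2) by (auto simp: dist_norm)
          thus "\<psi> t \<le> \<psi> 0" unfolding \<psi>_def using le Px1 by simp
        qed
      qed
      define \<phi> where "\<phi> t = \<psi> t + (\<epsilon> * hE \<alpha> z (x1 + t *\<^sub>R d) - \<epsilon> * c0)" for t
      have dB: "((\<lambda>t. \<epsilon> * hE \<alpha> z (x1 + t *\<^sub>R d) - \<epsilon> * c0) has_real_derivative
          ((- 2 * \<alpha> * \<epsilon> * hE \<alpha> z x1) *\<^sub>R (x1 - z)) \<bullet> d) (at 0)"
        using line_deriv[OF hb1[of \<epsilon> \<alpha> z "\<epsilon> * c0" "x1 + 0 *\<^sub>R d"]] by simp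
      have dpos: "((- 2 * \<alpha> * \<epsilon> * hE \<alpha> z x1) *\<^sub>R (x1 - z)) \<bullet> d > 0"
      proof -
        have "((- 2 * \<alpha> * \<epsilon> * hE \<alpha> z x1) *\<^sub>R (x1 - z)) \<bullet> d = 2 * \<alpha> * \<epsilon> * hE \<alpha> z x1 * (d \<bullet> d)"
          unfolding d_def by (simp add: algebra_simps inner_commute)
        moreover have "d \<bullet> d > 0" using Rpos unfolding d_def R_def by (simp add: dist_norm)
        moreover have "hE \<alpha> z x1 > 0" unfolding hE_def by simp
        ultimately have "2 * \<alpha> * \<epsilon> * hE \<alpha> z x1 * (d \<bullet> d) > 0" using \<alpha> \<epsilon> by simp
        thus ?thesis using \<open>((- 2 * \<alpha> * \<epsilon> * hE \<alpha> z x1) *\<^sub>R (x1 - z)) \<bullet> d = 2 * \<alpha> * \<epsilon> * hE \<alpha> z x1 * (d \<bullet> d)\<close> by linarith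
      qed
      have d\<phi>: "(\<phi> has_real_derivative l + ((- 2 * \<alpha> * \<epsilon> * hE \<alpha> z x1) *\<^sub>R (x1 - z)) \<bullet> d) (at 0)"
        unfolding \<phi>_def[abs_def] by (rule DERIV_add[OF l dB])
      obtain e2 where e2: "e2 > 0" "\<And>h. h > 0 \<Longrightarrow> h < e2 \<Longrightarrow> \<phi> 0 < \<phi> (0 + h)"
        using DERIV_pos_inc_right[OF d\<phi>] dpos l0 by auto
      define t where "t = min e2 (1/2) / 2"
      have t: "t > 0" "t < e2" "t < 1/2" using e2(1) unfolding t_def by auto
      have "\<phi> 0 < \<phi> t" using e2(2)[OF t(1,2)] by simp
      moreover have "\<phi> 0 = m" unfolding \<phi>_def \<psi>_def using Px1
        by (simp add: hE_def c0_def R_def dist_norm power2_norm_eq_inner[symmetric] norm_minus_commute)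
      moreover have "\<phi> t \<le> m"
      proof -
        have "dist z (x1 + t *\<^sub>R d) = (1 - t) * R"
        proof -
          have "z - (x1 + t *\<^sub>R d) = (1 - t) *\<^sub>R (z - x1)" unfolding d_def by (simp add: algebra_simps)
          thus ?thesis using t unfolding R_def by (simp add: dist_norm dist_commute)
        qed
        moreover have "t * R < (1/2) * R" using mult_strict_right_mono[OF t(3) Rpos] .
        moreover have "0 < t * R" using t Rpos by simp
        ultimately have "x1 + t *\<^sub>R d \<in> A" unfolding A_def by (simp add: algebra_simps)
        from core_app[OF this] show ?thesis unfolding \<phi>_def \<psi>_def .
      qed
      ultimately show False by simp
    qed
  qed
  have S_closed: "open {x \<in> \<Omega>. P x < m}"
  proof -
    have "open (P -` {..<m} \<inter> \<Omega>)" using P_contO opn continuous_on_open_vimage open_lessThan by blast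
    moreover have "P -` {..<m} \<inter> \<Omega> = {x \<in> \<Omega>. P x < m}" by auto
    ultimately show ?thesis by simp
  qed
  have "S \<inter> \<Omega> = {} \<or> {x \<in> \<Omega>. P x < m} \<inter> \<Omega> = {}"
  proof (rule connectedD[OF conn S_open S_closed])
    show "S \<inter> {x \<in> \<Omega>. P x < m} \<inter> \<Omega> = {}" unfolding S_def by auto
    show "\<Omega> \<subseteq> S \<union> {x \<in> \<Omega>. P x < m}" unfolding S_def using le by force
  qed
  moreover have "x0 \<in> S \<inter> \<Omega>" using x0 unfolding S_def by auto
  ultimately have "{x \<in> \<Omega>. P x < m} = {}" by auto
  thus "\<And>x. x \<in> \<Omega> \<Longrightarrow> P x = m" using le by force
qed

end


context torsion begin

lemma F_cont: "continuous_on \<Omega> F"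
  unfolding F_def
  by (intro continuous_on_diff continuous_on_mult continuous_on_const continuous_on_sum continuous_on_power)
     (use hess_cont in auto)

lemma rigid_F:
  assumes const: "\<And>x. x \<in> \<Omega> \<Longrightarrow> P x = m" and x1: "x1 \<in> \<Omega>"
  shows "F x1 \<le> 0"
proof (rule ccontr)
  assume "\<not> F x1 \<le> 0"
  hence Fp: "F x1 > 0" by simp
  obtain d1 where d1: "d1 > 0" "\<And>y. y \<in> \<Omega> \<Longrightarrow> dist y x1 < d1 \<Longrightarrow> dist (F y) (F x1) < F x1 / 2"
    using F_cont x1 Fp unfolding continuous_on_iff by (metis half_gt_zero)
  obtain d2 where d2: "d2 > 0" "ball x1 d2 \<subseteq> \<Omega>" using opn x1 open_contains_ball by blast
  define \<rho> where "\<rho> = min d1 d2 / 2"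
  have \<rho>: "\<rho> > 0" "\<rho> < d1" "\<rho> < d2" using d1 d2 unfolding \<rho>_def by auto
  define A where "A = ball x1 \<rho>"
  have clA: "closure A \<subseteq> \<Omega>" unfolding A_def using \<rho> d2(2) closure_ball[of \<rho> x1] by auto
  define N where "N = real CARD('n)"
  have Np: "N > 0" unfolding N_def by simp
  define \<kappa> where "\<kappa> = - F x1 / (8 * N)"
  have "P x1 + \<kappa> * ((x1 - x1) \<bullet> (x1 - x1)) \<le> m + \<kappa> * \<rho>\<^sup>2"
  proof (rule core[OF _ clA quad_d1 quad_d2, of "F x1 / 4"])
    show "open A" unfolding A_def by simp
    show "0 < F x1 / 4" using Fp by simp
    show "x1 \<in> A" unfolding A_def using \<rho> by simp
  next
    fix y assume y: "y \<in> A"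
    hence yO: "y \<in> \<Omega>" using clA closure_subset by blast
    have "dist y x1 < d1" using y \<rho> unfolding A_def by (simp add: dist_commute)
    hence "dist (F y) (F x1) < F x1 / 2" using d1(2)[OF yO] by simp
    hence "F y > F x1 / 2" unfolding dist_real_def by arith
    moreover have "(\<Sum>k\<in>UNIV. ((2 * \<kappa>) *\<^sub>R (axis k 1 :: real^'n)) $ k) = - F x1 / 4"
      unfolding quad_lap \<kappa>_def using Np unfolding N_def by simp
    ultimately show "F x1 / 4 \<le> F y + (\<Sum>k\<in>UNIV. ((2 * \<kappa>) *\<^sub>R (axis k 1 :: real^'n)) $ k)" by simp
  next
    fix z assume "z \<in> frontier A"
    hence z: "dist x1 z = \<rho>" unfolding A_def using \<rho> by (simp add: frontier_ball)
    hence zO: "z \<in> \<Omega>" using clA closure_ball[of \<rho> x1] \<rho> unfolding A_def by auto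
    have "(z - x1) \<bullet> (z - x1) = \<rho>\<^sup>2" using z by (simp add: dist_norm power2_norm_eq_inner[symmetric] norm_minus_commute)
    thus "P z + \<kappa> * ((z - x1) \<bullet> (z - x1)) \<le> m + \<kappa> * \<rho>\<^sup>2" using const[OF zO] by simp
  qed
  moreover have "\<kappa> * \<rho>\<^sup>2 < 0" unfolding \<kappa>_def using Fp Np \<rho> by (simp add: mult_neg_pos)
  ultimately show False using const[OF x1] by simp
qed

lemma hess_id:
  assumes x: "x \<in> \<Omega>" and F0: "F x = 0"
  shows "D2u x v = - v"
proof -
  define a where "a j k = D2u x (axis j 1) $ k" for j k
  define N where "N = real CARD('n)"
  have s2: "(\<Sum>j\<in>UNIV. \<Sum>k\<in>UNIV. (a j k)\<^sup>2) = N" using F0 unfolding F_def a_def N_def by simp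
  have s1: "(\<Sum>j\<in>UNIV. a j j) = - N" using pde x unfolding a_def N_def by simp
  have e: "(\<Sum>k\<in>UNIV. (a j k + (if j = k then 1 else 0))\<^sup>2) = (\<Sum>k\<in>UNIV. (a j k)\<^sup>2) + 2 * a j j + 1" for j
  proof -
    have "(\<Sum>k\<in>UNIV. (a j k + (if j = k then 1 else 0))\<^sup>2) = (\<Sum>k\<in>UNIV. (a j k)\<^sup>2 + (if j = k then 2 * a j k + 1 else 0))"
      by (intro sum.cong refl) (auto simp: power2_eq_square algebra_simps)
    also have "\<dots> = (\<Sum>k\<in>UNIV. (a j k)\<^sup>2) + (2 * a j j + 1)"
      by (simp add: sum.distrib)
    finally show ?thesis by simp
  qed
  have "(\<Sum>j\<in>UNIV. \<Sum>k\<in>UNIV. (a j k + (if j = k then 1 else 0))\<^sup>2) = 0"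
    unfolding e using s1 s2 unfolding N_def by (simp add: sum.distrib sum_distrib_left[symmetric])
  hence z: "(a j k + (if j = k then 1 else 0))\<^sup>2 = 0" for j k
    by (simp add: sum_nonneg_eq_0_iff sum_nonneg)
  have col: "D2u x (axis j 1) = - axis j 1" for j
  proof (rule vec_eq_iff[THEN iffD2], rule allI)
    fix k show "D2u x (axis j 1) $ k = (- axis j 1 :: real^'n) $ k"
      using z[of j k] unfolding a_def by (auto simp: axis_def)
  qed
  have lin: "linear (D2u x)" using hess x has_derivative_linear by blast
  have "D2u x v = D2u x (\<Sum>j\<in>UNIV. (v $ j) *s axis j 1)" by (simp add: basis_expansion)
  also have "\<dots> = (\<Sum>j\<in>UNIV. (v $ j) *\<^sub>R D2u x (axis j 1))"
    by (simp add: linear_sum[OF lin] linear_scale[OF lin] scalar_mult_eq_scaleR)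
  also have "\<dots> = - (\<Sum>j\<in>UNIV. (v $ j) *s axis j 1)" by (simp add: col sum_negf scalar_mult_eq_scaleR)
  also have "\<dots> = - v" by (simp add: basis_expansion)
  finally show ?thesis .
qed

end


lemma agree_closure:
  fixes f g :: "'a::topological_space \<Rightarrow> 'b::real_normed_vector"
  assumes "continuous_on (closure S) f" "continuous_on (closure S) g" "\<And>x. x \<in> S \<Longrightarrow> f x = g x"
    and x: "x \<in> closure S"
  shows "f x = g x"
proof -
  have "closed {y \<in> closure S. f y - g y = 0}"
    by (rule continuous_closed_preimage_constant) (use assms in \<open>auto intro: continuous_intros\<close>)
  moreover have "S \<subseteq> {y \<in> closure S. f y - g y = 0}" using assms(3) closure_subset by auto
  ultimately have "closure S \<subseteq> {y \<in> closure S. f y - g y = 0}" by (rule closure_minimal[rotated])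
  thus ?thesis using x by auto
qed

context torsion begin

lemma no_interior_min:
  assumes x: "x \<in> \<Omega>" and mn: "\<And>y. y \<in> \<Omega> \<Longrightarrow> u x \<le> u y"
  shows False
proof -
  obtain \<rho> where \<rho>: "\<rho> > 0" "ball x \<rho> \<subseteq> \<Omega>" using opn x open_contains_ball by blast
  have inb: "x + t *\<^sub>R axis k 1 \<in> \<Omega>" if "\<bar>t\<bar> < \<rho>" for t k
    using \<rho>(2) that by (auto simp: dist_norm)
  have "D2u x (axis k 1) $ k \<ge> 0" for k
  proof (rule second_deriv_local_min[OF \<rho>(1), of "\<lambda>t. u (x + t *\<^sub>R axis k 1)" "\<lambda>t. Du (x + t *\<^sub>R axis k 1) $ k"])
    fix t :: real assume t: "\<bar>t\<bar> < \<rho>"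
    show "((\<lambda>t. u (x + t *\<^sub>R axis k 1)) has_real_derivative Du (x + t *\<^sub>R axis k 1) $ k) (at t)"
      by (rule u_line[OF inb[OF t]])
    show "u (x + 0 *\<^sub>R axis k 1) \<le> u (x + t *\<^sub>R axis k 1)" using mn[OF inb[OF t]] by simp
  next
    show "((\<lambda>t. Du (x + t *\<^sub>R axis k 1) $ k) has_real_derivative D2u x (axis k 1) $ k) (at 0)"
      using Du_line[of x 0 k k] x by simp
  qed
  hence "(\<Sum>k\<in>UNIV. D2u x (axis k 1) $ k) \<ge> 0" by (simp add: sum_nonneg)
  thus False using pde x by simp
qed

lemma u_pos:
  assumes bdry: "\<And>z. z \<in> frontier \<Omega> \<Longrightarrow> u z = 0" and x: "x \<in> \<Omega>"
  shows "u x > 0"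
proof -
  have cc: "compact (closure \<Omega>)" using bdd bounded_closure by (simp add: compact_eq_bounded_closed)
  obtain x2 where x2: "x2 \<in> closure \<Omega>" "\<And>y. y \<in> closure \<Omega> \<Longrightarrow> u x2 \<le> u y"
    using continuous_attains_inf[OF cc _ u_cont] x closure_subset by blast
  have "x2 \<notin> \<Omega>" using no_interior_min[of x2] x2 closure_subset by blast
  hence "x2 \<in> frontier \<Omega>" using x2(1) closure_Un_frontier by blast
  hence "u x2 = 0" using bdry by blast
  hence nn: "u y \<ge> 0" if "y \<in> closure \<Omega>" for y using x2(2)[OF that] by simp
  show ?thesis
  proof (rule ccontr)
    assume "\<not> u x > 0"
    hence "u x = 0" using nn[of x] x closure_subset by force
    thus False using no_interior_min[OF x] nn closure_subset by force
  qed
qed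

end


lemma ball_shape:
  fixes \<Omega> :: "(real^'n) set" and u :: "real^'n \<Rightarrow> real"
  assumes opn: "open \<Omega>" and bdd: "bounded \<Omega>" and ne: "\<Omega> \<noteq> {}"
    and form: "\<And>x. x \<in> \<Omega> \<Longrightarrow> u x = C - ((x - c) \<bullet> (x - c)) / 2"
    and uc: "continuous_on (closure \<Omega>) u" and bdry: "\<And>z. z \<in> frontier \<Omega> \<Longrightarrow> u z = 0"
  shows "\<Omega> = ball c (sqrt (2 * C)) \<and> sqrt (2 * C) > 0 \<and> C > 0"
proof -
  define R where "R = sqrt (2 * C)"
  have fc: "u z = C - ((z - c) \<bullet> (z - c)) / 2" if "z \<in> closure \<Omega>" for z
    by (rule agree_closure[OF uc _ form that]) (auto intro!: continuous_intros)
  have fr: "dist c z = R" if "z \<in> frontier \<Omega>" for z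
  proof -
    have "z \<in> closure \<Omega>" using that frontier_def by auto
    hence "(z - c) \<bullet> (z - c) = 2 * C" using fc bdry[OF that] by simp
    hence "(dist c z)\<^sup>2 = 2 * C" by (simp add: dist_norm power2_norm_eq_inner[symmetric] norm_minus_commute)
    thus ?thesis unfolding R_def by (metis real_sqrt_abs abs_of_nonneg zero_le_dist)
  qed
  have frne: "frontier \<Omega> \<noteq> {}"
    using frontier_not_empty[OF ne] bdd not_bounded_UNIV by blast
  have Rnn: "R \<ge> 0" unfolding R_def using frne fr by (metis all_not_in_conv zero_le_dist R_def)
  have frO: "z \<notin> \<Omega>" if "z \<in> frontier \<Omega>" for z using that opn by (simp add: frontier_def interior_open)
  obtain b where b: "\<And>y. y \<in> \<Omega> \<Longrightarrow> norm y \<le> b" using bdd bounded_iff by blast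
  have sub: "\<Omega> \<subseteq> ball c R"
  proof
    fix x assume x: "x \<in> \<Omega>"
    show "x \<in> ball c R"
    proof (rule ccontr)
      assume "x \<notin> ball c R"
      hence xR: "dist c x \<ge> R" by simp
      define v where "v = (if x = c then axis undefined 1 else x - c)"
      have vn: "v \<noteq> 0" unfolding v_def by (auto simp: axis_eq_0_iff)
      hence nv: "norm v > 0" by simp
      define T where "T = (b + norm x + 1) / norm v"
      have bnn: "b \<ge> 0" using b[OF x] norm_ge_zero order_trans by blast
      have Tp: "T \<ge> 0" unfolding T_def using nv bnn by simp
      define Sg where "Sg = (\<lambda>t. x + t *\<^sub>R v) ` {0..T}"
      have cS: "connected Sg" unfolding Sg_def
        by (rule connected_continuous_image) (auto intro!: continuous_intros)
      have "x \<in> Sg \<inter> \<Omega>" unfolding Sg_def using x Tp by (auto intro!: image_eqI[of _ _ 0])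
      hence i1: "Sg \<inter> \<Omega> \<noteq> {}" by blast
      have far: "x + T *\<^sub>R v \<notin> \<Omega>"
      proof
        assume "x + T *\<^sub>R v \<in> \<Omega>"
        hence "norm (x + T *\<^sub>R v) \<le> b" using b by blast
        moreover have "norm (T *\<^sub>R v) = b + norm x + 1" unfolding T_def using nv bnn by simp
        moreover have "norm (T *\<^sub>R v) \<le> norm (x + T *\<^sub>R v) + norm x"
        proof -
          have "norm (T *\<^sub>R v) = norm ((x + T *\<^sub>R v) + (- x))" by simp
          also have "\<dots> \<le> norm (x + T *\<^sub>R v) + norm (- x)" by (rule norm_triangle_ineq)
          finally show ?thesis by simp
        qed
        ultimately show False by linarith
      qed
      have "x + T *\<^sub>R v \<in> Sg" unfolding Sg_def using Tp by auto
      hence i2: "Sg - \<Omega> \<noteq> {}" using far by blast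
      obtain y where y: "y \<in> Sg" "y \<in> frontier \<Omega>" using connected_Int_frontier[OF cS i1 i2] by blast
      then obtain t where t: "t \<in> {0..T}" "y = x + t *\<^sub>R v" unfolding Sg_def by blast
      have "t \<noteq> 0" using t y(2) frO x by auto
      hence tp: "t > 0" using t(1) by simp
      have "dist c y = R" using fr[OF y(2)] .
      moreover have "dist c y > R"
      proof (cases "x = c")
        case True
        hence "y - c = t *\<^sub>R v" using t(2) by simp
        moreover have "dist c y = norm (y - c)" by (simp add: dist_norm norm_minus_commute)
        ultimately have "dist c y = t * norm v" using tp by simp
        moreover have "R \<le> 0" using xR True by simp
        moreover have "t * norm v > 0" using tp nv by (rule mult_pos_pos)
        ultimately show ?thesis by simp
      next
        case False
        hence "y - c = (1 + t) *\<^sub>R (x - c)" using t(2) unfolding v_def by (simp add: algebra_simps)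
        moreover have "dist c y = norm (y - c)" "dist c x = norm (x - c)" by (simp_all add: dist_norm norm_minus_commute)
        ultimately have "dist c y = (1 + t) * dist c x" using tp by simp
        moreover have "dist c x > 0" using False by simp
        moreover have "t * dist c x > 0" using tp \<open>dist c x > 0\<close> by (rule mult_pos_pos)
        ultimately show ?thesis using xR by (simp add: algebra_simps)
      qed
      ultimately show False by simp
    qed
  qed
  have Rp: "R > 0" using sub ne by (metis ball_eq_empty not_less subset_empty)
  have sup: "ball c R \<subseteq> \<Omega>"
  proof (rule ccontr)
    assume "\<not> ball c R \<subseteq> \<Omega>"
    hence i2: "ball c R - \<Omega> \<noteq> {}" by blast
    have i1: "ball c R \<inter> \<Omega> \<noteq> {}" using sub ne by blast
    obtain y where "y \<in> ball c R" "y \<in> frontier \<Omega>" using connected_Int_frontier[OF connected_ball i1 i2] by blast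
    thus False using fr by force
  qed
  have "C > 0" using Rp unfolding R_def by simp
  thus ?thesis using sub sup Rp unfolding R_def by blast
qed

lemma ball_image:
  fixes c :: "real^'n"
  assumes R: "R > 0"
  shows "ball c R = (\<lambda>x. R *\<^sub>R x + c) ` ball 0 1"
proof
  show "(\<lambda>x. R *\<^sub>R x + c) ` ball 0 1 \<subseteq> ball c R"
  proof
    fix y assume "y \<in> (\<lambda>x. R *\<^sub>R x + c) ` ball 0 1"
    then obtain x where x: "norm x < 1" "y = R *\<^sub>R x + c" by auto
    have "dist c y = R * norm x" using x R by (simp add: dist_norm)
    also have "\<dots> < R * 1" using x R by (intro mult_strict_left_mono) auto
    finally show "y \<in> ball c R" by simp
  qed
next
  show "ball c R \<subseteq> (\<lambda>x. R *\<^sub>R x + c) ` ball 0 1"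
  proof
    fix y assume y: "y \<in> ball c R"
    have "y = R *\<^sub>R ((1/R) *\<^sub>R (y - c)) + c" using R by simp
    moreover have "norm ((1/R) *\<^sub>R (y - c)) < 1"
      using y R by (simp add: dist_norm norm_minus_commute divide_less_eq)
    ultimately show "y \<in> (\<lambda>x. R *\<^sub>R x + c) ` ball 0 1"
      by (intro image_eqI[of y _ "(1/R) *\<^sub>R (y - c)"]) auto
  qed
qed


theorem proposition3p1:
  fixes \<Omega> :: "(real^'n) set" and u :: "real^'n \<Rightarrow> real"
    and Du :: "real^'n \<Rightarrow> real^'n" and D2u :: "real^'n \<Rightarrow> real^'n \<Rightarrow> real^'n"
  assumes dim: "CARD('n) \<ge> 3"
    and dom: "bounded_domain \<Omega>"
    and smooth: "smooth_boundary \<Omega>"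
    and grad: "\<forall>x\<in>\<Omega>. (u has_derivative (\<lambda>h. Du x \<bullet> h)) (at x)"
    and hess: "\<forall>x\<in>\<Omega>. (Du has_derivative D2u x) (at x)"
    and hess_cont: "\<forall>i j. continuous_on \<Omega> (\<lambda>x. D2u x (axis i 1) $ j)"
    and pde: "\<forall>x\<in>\<Omega>. (\<Sum>i\<in>UNIV. D2u x (axis i 1) $ i) = - real CARD('n)"
    and u_cont: "continuous_on (closure \<Omega>) u"
    and Du_cont: "continuous_on (closure \<Omega>) Du"
    and bdry: "\<forall>x\<in>frontier \<Omega>. u x = 0"
  shows "(SUP x\<in>frontier \<Omega>. norm (Du x) / sqrt (2 * (SUP y\<in>closure \<Omega>. u y))) \<ge> 1
     \<and> ((SUP x\<in>frontier \<Omega>. norm (Du x) / sqrt (2 * (SUP y\<in>closure \<Omega>. u y))) = 1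
          \<longleftrightarrow> equivalent_pair \<Omega> u (ball 0 1) u0)"
proof -
  have opn: "open \<Omega>" and bdd: "bounded \<Omega>" and conn: "connected \<Omega>" and ne: "\<Omega> \<noteq> {}"
    using dom unfolding bounded_domain_def by auto
  interpret torsion \<Omega> u Du D2u
    by unfold_locales (use opn bdd grad hess hess_cont pde u_cont Du_cont in auto)
  have cc: "compact (closure \<Omega>)" using bdd bounded_closure by (simp add: compact_eq_bounded_closed)
  have frc: "compact (frontier \<Omega>)" using bdd by (rule compact_frontier_bounded)
  have frne: "frontier \<Omega> \<noteq> {}" using frontier_not_empty[OF ne] bdd not_bounded_UNIV by blast
  have frcl: "frontier \<Omega> \<subseteq> closure \<Omega>" by (auto simp: frontier_def)
  obtain xa where xa: "xa \<in> \<Omega>" using ne by blast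
  obtain x0 where x0: "x0 \<in> closure \<Omega>" "\<And>y. y \<in> closure \<Omega> \<Longrightarrow> u y \<le> u x0"
    using continuous_attains_sup[OF cc _ u_cont] ne closure_subset by blast
  define M where "M = (SUP y\<in>closure \<Omega>. u y)"
  have M: "M = u x0" unfolding M_def by (rule cSup_eq_maximum) (use x0 in auto)
  have Mpos: "M > 0" using u_pos[OF _ xa] bdry x0(2)[of xa] xa closure_subset M by force
  have x0O: "x0 \<in> \<Omega>"
  proof -
    have "x0 \<notin> frontier \<Omega>" using bdry Mpos M by auto
    thus ?thesis using x0(1) closure_Un_frontier by blast
  qed
  have nc: "continuous_on (frontier \<Omega>) (\<lambda>z. norm (Du z))"
    by (rule continuous_on_norm[OF continuous_on_subset[OF Du_cont frcl]])
  obtain zs where zs: "zs \<in> frontier \<Omega>" "\<And>z. z \<in> frontier \<Omega> \<Longrightarrow> norm (Du z) \<le> norm (Du zs)"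
    using continuous_attains_sup[OF frc frne nc] by blast
  define r where "r z = norm (Du z) / sqrt (2 * M)" for z
  have sM: "sqrt (2 * M) > 0" using Mpos by simp
  have SUPeq: "(SUP x\<in>frontier \<Omega>. norm (Du x) / sqrt (2 * (SUP y\<in>closure \<Omega>. u y))) = r zs"
    unfolding M_def[symmetric] r_def
  proof (rule cSup_eq_maximum)
    show "norm (Du zs) / sqrt (2 * M) \<in> (\<lambda>x. norm (Du x) / sqrt (2 * M)) ` frontier \<Omega>"
      by (rule imageI[OF zs(1)])
    fix q assume "q \<in> (\<lambda>x. norm (Du x) / sqrt (2 * M)) ` frontier \<Omega>"
    then obtain z where z: "z \<in> frontier \<Omega>" "q = norm (Du z) / sqrt (2 * M)" by blast
    show "q \<le> norm (Du zs) / sqrt (2 * M)"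
      unfolding z(2) by (rule divide_right_mono[OF zs(2)[OF z(1)]]) (use sM in simp)
  qed
  have Pw: "P x \<le> (norm (Du zs))\<^sup>2" if "x \<in> \<Omega>" for x
  proof (rule weak_P[OF _ that])
    fix z assume z: "z \<in> frontier \<Omega>"
    have "P z = (norm (Du z))\<^sup>2" using bdry z unfolding P_def by (simp add: power2_norm_eq_inner)
    also have "\<dots> \<le> (norm (Du zs))\<^sup>2" by (rule power_mono[OF zs(2)[OF z] norm_ge_zero])
    finally show "P z \<le> (norm (Du zs))\<^sup>2" .
  qed
  have P0: "P x0 \<ge> 2 * M" using M unfolding P_def by simp
  have le2M: "2 * M \<le> (norm (Du zs))\<^sup>2" using Pw[OF x0O] P0 by linarith
  hence sle: "sqrt (2 * M) \<le> norm (Du zs)" by (rule real_le_lsqrt[OF norm_ge_zero])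
  have ge1: "r zs \<ge> 1" unfolding r_def using sle sM by simp
  have iff: "r zs = 1 \<longleftrightarrow> equivalent_pair \<Omega> u (ball 0 1) u0"
  proof
    assume r1: "r zs = 1"
    hence "norm (Du zs) = sqrt (2 * M)" unfolding r_def using sM by (simp add: divide_eq_1_iff)
    hence G: "(norm (Du zs))\<^sup>2 = 2 * M" using Mpos by simp
    have Ple: "P x \<le> 2 * M" if "x \<in> \<Omega>" for x using Pw[OF that] G by simp
    have Pc: "P x = 2 * M" if "x \<in> \<Omega>" for x
      by (rule strong_P[OF conn Ple x0O _ that]) (use P0 Ple[OF x0O] in auto)
    have F0: "F x = 0" if "x \<in> \<Omega>" for x
      using rigid_F[OF Pc that] F_nonneg[OF that] by simp
    have hid: "D2u x v = - v" if "x \<in> \<Omega>" for x v using hess_id[OF that F0[OF that]] .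
    have Duc: "continuous_on \<Omega> Du" using Du_cont closure_subset continuous_on_subset by blast
    have "(\<lambda>x. Du x + x) constant_on \<Omega>"
    proof (rule has_derivative_zero_connected_constant_on[OF conn opn finite.emptyI])
      show "continuous_on \<Omega> (\<lambda>x. Du x + x)" by (rule continuous_on_add[OF Duc continuous_on_id])
      show "\<forall>x\<in>\<Omega> - {}. ((\<lambda>x. Du x + x) has_derivative (\<lambda>h. 0)) (at x within \<Omega>)"
      proof
        fix x assume x: "x \<in> \<Omega> - {}"
        have "((\<lambda>x. Du x + x) has_derivative (\<lambda>h. D2u x h + h)) (at x)"
          by (rule has_derivative_add[OF _ has_derivative_ident]) (use hess x in auto)
        moreover have "(\<lambda>h. D2u x h + h) = (\<lambda>h. 0)" using hid x by auto
        ultimately show "((\<lambda>x. Du x + x) has_derivative (\<lambda>h. 0)) (at x within \<Omega>)"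
          by (simp add: has_derivative_at_withinI)
      qed
    qed
    then obtain c where c: "\<And>x. x \<in> \<Omega> \<Longrightarrow> Du x + x = c" unfolding constant_on_def by blast
    have "(\<lambda>x. u x + ((x - c) \<bullet> (x - c)) / 2) constant_on \<Omega>"
    proof (rule has_derivative_zero_connected_constant_on[OF conn opn finite.emptyI])
      show "continuous_on \<Omega> (\<lambda>x. u x + ((x - c) \<bullet> (x - c)) / 2)"
      proof -
        have uO: "continuous_on \<Omega> u" using u_cont closure_subset continuous_on_subset by blast
        show ?thesis by (intro continuous_intros uO) simp
      qed
      show "\<forall>x\<in>\<Omega> - {}. ((\<lambda>x. u x + ((x - c) \<bullet> (x - c)) / 2) has_derivative (\<lambda>h. 0)) (at x within \<Omega>)"
      proof
        fix x assume x: "x \<in> \<Omega> - {}"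
        have g: "(u has_derivative (\<lambda>h. Du x \<bullet> h)) (at x)" using grad x by auto
        have "((\<lambda>x. u x + ((x - c) \<bullet> (x - c)) / 2) has_derivative
            (\<lambda>h. Du x \<bullet> h + ((x - c) \<bullet> h + h \<bullet> (x - c)) / 2)) (at x)"
          by (rule derivative_eq_intros g refl | simp)+
        moreover have "(\<lambda>h. Du x \<bullet> h + ((x - c) \<bullet> h + h \<bullet> (x - c)) / 2) = (\<lambda>h. 0)"
        proof
          fix h
          have dx: "Du x = c - x" using c[of x] x by (simp add: algebra_simps)
          have "h \<bullet> (x - c) = (x - c) \<bullet> h" by (rule inner_commute)
          moreover have "(c - x) \<bullet> h = - ((x - c) \<bullet> h)" by (simp add: inner_diff_left)
          ultimately show "Du x \<bullet> h + ((x - c) \<bullet> h + h \<bullet> (x - c)) / 2 = 0"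
            unfolding dx by simp
        qed
        ultimately show "((\<lambda>x. u x + ((x - c) \<bullet> (x - c)) / 2) has_derivative (\<lambda>h. 0)) (at x within \<Omega>)"
          by (simp add: has_derivative_at_withinI)
      qed
    qed
    then obtain C where C: "\<And>x. x \<in> \<Omega> \<Longrightarrow> u x + ((x - c) \<bullet> (x - c)) / 2 = C" unfolding constant_on_def by blast
    have form: "\<And>x. x \<in> \<Omega> \<Longrightarrow> u x = C - ((x - c) \<bullet> (x - c)) / 2" using C by (simp add: algebra_simps)
    have bs: "\<Omega> = ball c (sqrt (2 * C)) \<and> sqrt (2 * C) > 0 \<and> C > 0"
      by (rule ball_shape[OF opn bdd ne form u_cont]) (use bdry in auto)
    define R where "R = sqrt (2 * C)"
    have R: "R > 0" "R\<^sup>2 = 2 * C" "\<Omega> = ball c R" using bs unfolding R_def by auto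
    show "equivalent_pair \<Omega> u (ball 0 1) u0"
      unfolding equivalent_pair_def
    proof (intro exI[of _ R] conjI exI[of _ c] ballI)
      show "R > 0" using R(1) .
      show "\<Omega> = (\<lambda>x. R *\<^sub>R x + c) ` ball 0 1" using R(3) ball_image[OF R(1)] by simp
      fix y assume y: "y \<in> \<Omega>"
      have nn: "norm ((1 / R) *\<^sub>R (y - c)) = norm (y - c) / R" using R(1) by simp
      have "R\<^sup>2 * u0 ((1 / R) *\<^sub>R (y - c)) = (R\<^sup>2 - (norm (y - c))\<^sup>2) / 2"
        unfolding u0_def nn using R(1) by (simp add: power_divide field_simps)
      also have "\<dots> = C - ((y - c) \<bullet> (y - c)) / 2" using R(2) by (simp add: power2_norm_eq_inner field_simps)
      also have "\<dots> = u y" using form[OF y] by simp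
      finally show "u y = R\<^sup>2 * u0 ((1 / R) *\<^sub>R (y - c))" by simp
    qed
  next
    assume "equivalent_pair \<Omega> u (ball 0 1) u0"
    then obtain l c where l: "l > 0" "\<Omega> = (\<lambda>x. l *\<^sub>R x + c) ` ball 0 1"
      and ul: "\<And>y. y \<in> \<Omega> \<Longrightarrow> u y = l\<^sup>2 * u0 ((1/l) *\<^sub>R (y - c))"
      unfolding equivalent_pair_def by blast
    have Ob: "\<Omega> = ball c l" by (metis l(2) ball_image[OF l(1)])
    have form: "u y = (l\<^sup>2 - (y - c) \<bullet> (y - c)) / 2" if "y \<in> \<Omega>" for y
    proof -
      have nn: "norm ((1 / l) *\<^sub>R (y - c)) = norm (y - c) / l" using l(1) by simp
      have "u y = l\<^sup>2 * ((1 - (norm (y - c) / l)\<^sup>2) / 2)" using ul[OF that] unfolding u0_def nn .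
      also have "\<dots> = (l\<^sup>2 - (norm (y - c))\<^sup>2) / 2" using l(1) by (simp add: power_divide field_simps)
      also have "\<dots> = (l\<^sup>2 - (y - c) \<bullet> (y - c)) / 2" by (simp add: power2_norm_eq_inner)
      finally show ?thesis .
    qed
    have cO: "c \<in> \<Omega>" using Ob l(1) by simp
    have "M \<ge> u c" using M x0(2)[of c] cO closure_subset by blast
    hence "M \<ge> l\<^sup>2 / 2" using form[OF cO] by simp
    moreover have "M \<le> l\<^sup>2 / 2" using M form[OF x0O] by simp
    ultimately have Ml: "2 * M = l\<^sup>2" by simp
    have Dux: "Du x = c - x" if x: "x \<in> \<Omega>" for x
    proof -
      have "((\<lambda>y. (l\<^sup>2 - (y - c) \<bullet> (y - c)) / 2) has_derivative (\<lambda>h. (- ((x - c) \<bullet> h + h \<bullet> (x - c))) / 2)) (at x)"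
        by (rule derivative_eq_intros refl | simp)+
      hence "(u has_derivative (\<lambda>h. (- ((x - c) \<bullet> h + h \<bullet> (x - c))) / 2)) (at x)"
        by (rule has_derivative_transform_within_open[OF _ opn x]) (use form in auto)
      from has_derivative_unique[OF grad[rule_format, OF x] this]
      have e: "\<And>h. Du x \<bullet> h = (- ((x - c) \<bullet> h + h \<bullet> (x - c))) / 2" by meson
      have "(Du x - (c - x)) \<bullet> (Du x - (c - x)) = 0"
        using e[of "Du x - (c - x)"] by (simp add: inner_diff_left inner_commute algebra_simps)
      thus ?thesis by simp
    qed
    have "Du zs = c - zs"
      by (rule agree_closure[OF Du_cont _ Dux]) (use zs(1) frcl in \<open>auto intro!: continuous_intros\<close>)
    moreover have "dist c zs = l" using zs(1) Ob l(1) by simp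
    ultimately have "norm (Du zs) = l" by (simp add: dist_norm)
    moreover have "sqrt (2 * M) = l" using Ml l(1) by simp
    ultimately show "r zs = 1" unfolding r_def using l(1) by simp
  qed
  show ?thesis using SUPeq ge1 iff by simp
qed


end
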